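(* Let $\phi$ be a Drinfeld $A$-module over an arbitrary field $L$ of characteristic $p$, and let $v$ be a valuation on $L$ with residue field $\ell_v$ at which $\phi$ has good reduction $\phi_v$, with characteristic ideal $\mathfrak{p}_v\subset A$. Then the natural reduction homomorphism $\mathrm{End}_L(\phi)\to\mathrm{End}_{\ell_v}(\phi_v)$ is injective, and for every torsion element $x$ of its cokernel there is an integer $k\ge0$ with $\mathfrak{p}_v^kx=0$ (where $\mathfrak p_v^0=A$).
   Context: $A$ is an admissible coefficient ring; $L[\tau]$ is the twisted polynomial ring with $\tau x=x^p\tau$; a Drinfeld $A$-module over $L$ is a ring homomorphism $\phi\colon A\to L[\tau]$ with image not in $L$; $\mathrm{End}_L(\phi)$ is the centralizer of $\phi(A)$ in $L[\tau]$, an $A$-module via $\phi$. $\phi$ has good reduction at $v$ if, after conjugating by some $y\in L^\times$ (replacing $\phi_a$ by $y^{-1}\phi_ay$), all coefficients of all $\phi_a$ lie in the valuation ring of $v$ and for $a\neq0$ the leading coefficient of $\phi_a$ is a unit; $\phi_v$ is then the reduction of the coefficients to $\ell_v$, a Drinfeld $A$-module over $\ell_v$, and the reduction homomorphism sends an endomorphism (which then has coefficients in the valuation ring) to its coefficientwise reduction. The characteristic ideal of $\phi_v$ is the kernel of $a\mapsto$ constant coefficient of $\phi_{v,a}$. *)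

theory Defs
  imports "HOL-Computational_Algebra.Polynomial" "HOL-Computational_Algebra.Fraction_Field"
begin

definition prime_poly_subring :: "'a::comm_ring_1 \<Rightarrow> 'a set" where
  "prime_poly_subring t = {\<Sum>i<n. of_nat (c i) * t ^ i | n c. True}"

text \<open>A is an admissible coefficient ring: the ring of functions on a smooth projective
  geometrically irreducible curve over a finite field regular outside one closed point.
  Intrinsically: a normal integral domain of characteristic p, finitely generated of
  Krull dimension 1 over F_p (i.e. infinite and finite as a module over F_p[t] for some t),
  with finite unit group (equivalent to having exactly one place at infinity).\<close>
definition admissible_coeff_ring :: "'a::idom itself \<Rightarrow> bool" where
  "admissible_coeff_ring _ \<longleftrightarrow>
     prime CHAR('a) \<and> infinite (UNIV :: 'a set) \<and>
     (\<exists>t::'a. \<exists>bs::'a list. \<forall>a::'a. \<exists>q::nat \<Rightarrow> 'a.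
        (\<forall>j<length bs. q j \<in> prime_poly_subring t) \<and> a = (\<Sum>j<length bs. q j * bs ! j)) \<and>
     (\<forall>(f::'a poly) (a::'a) (b::'a). lead_coeff f = 1 \<and> b \<noteq> 0 \<and>
        poly (map_poly (\<lambda>c. Fract c 1) f) (Fract a b) = 0 \<longrightarrow> b dvd a) \<and>
     finite {u::'a. u dvd 1}"

text \<open>A twisted polynomial sum f_i tau^i is represented by the ordinary polynomial with the
  same coefficients; this is its twisted product.\<close>
definition tmult :: "nat \<Rightarrow> 'l::field poly \<Rightarrow> 'l poly \<Rightarrow> 'l poly" where
  "tmult p f g = (\<Sum>i\<le>degree f. monom (coeff f i) i * map_poly (\<lambda>c. c ^ (p ^ i)) g)"

definition drinfeld_module :: "nat \<Rightarrow> ('a::comm_ring_1 \<Rightarrow> 'l::field poly) \<Rightarrow> bool" where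
  "drinfeld_module p \<phi> \<longleftrightarrow>
     \<phi> 1 = 1 \<and> (\<forall>a b. \<phi> (a + b) = \<phi> a + \<phi> b) \<and>
     (\<forall>a b. \<phi> (a * b) = tmult p (\<phi> a) (\<phi> b)) \<and>
     (\<exists>a. degree (\<phi> a) > 0)"

definition End :: "nat \<Rightarrow> ('a \<Rightarrow> 'l::field poly) \<Rightarrow> 'l poly set" where
  "End p \<phi> = {f. \<forall>a. tmult p f (\<phi> a) = tmult p (\<phi> a) f}"

definition conj_tp :: "nat \<Rightarrow> 'l::field \<Rightarrow> 'l poly \<Rightarrow> 'l poly" where
  "conj_tp p y f = tmult p [:inverse y:] (tmult p f [:y:])"

definition valuation :: "('l::field \<Rightarrow> 'g::linordered_ab_group_add) \<Rightarrow> bool" where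
  "valuation v \<longleftrightarrow>
     (\<forall>x y. x \<noteq> 0 \<and> y \<noteq> 0 \<longrightarrow> v (x * y) = v x + v y) \<and>
     (\<forall>x y. x \<noteq> 0 \<and> y \<noteq> 0 \<and> x + y \<noteq> 0 \<longrightarrow> min (v x) (v y) \<le> v (x + y))"

definition val_ring :: "('l::field \<Rightarrow> 'g::linordered_ab_group_add) \<Rightarrow> 'l set" where
  "val_ring v = {x. x = 0 \<or> v x \<ge> 0}"

definition val_ideal :: "('l::field \<Rightarrow> 'g::linordered_ab_group_add) \<Rightarrow> 'l set" where
  "val_ideal v = {x. x = 0 \<or> v x > 0}"

text \<open>red is the residue map onto the residue field 'k: restricted to the valuation ring it is
  a surjective ring homomorphism with kernel the maximal ideal (so 'k is the residue field up to
  the induced isomorphism).\<close>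
definition residue_map :: "('l::field \<Rightarrow> 'g::linordered_ab_group_add) \<Rightarrow> ('l \<Rightarrow> 'k::field) \<Rightarrow> bool" where
  "residue_map v red \<longleftrightarrow>
     red 1 = 1 \<and>
     (\<forall>x\<in>val_ring v. \<forall>y\<in>val_ring v. red (x + y) = red x + red y \<and> red (x * y) = red x * red y) \<and>
     red ` val_ring v = UNIV \<and>
     (\<forall>x\<in>val_ring v. red x = 0 \<longleftrightarrow> x \<in> val_ideal v)"

definition in_val_ring_poly :: "('l::field \<Rightarrow> 'g::linordered_ab_group_add) \<Rightarrow> 'l poly \<Rightarrow> bool" where
  "in_val_ring_poly v f \<longleftrightarrow> (\<forall>i. coeff f i \<in> val_ring v)"

definition good_reduction_via ::
  "nat \<Rightarrow> ('a::comm_ring_1 \<Rightarrow> 'l::field poly) \<Rightarrow> ('l \<Rightarrow> 'g::linordered_ab_group_add) \<Rightarrow> 'l \<Rightarrow> bool" where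
  "good_reduction_via p \<phi> v y \<longleftrightarrow> y \<noteq> 0 \<and>
     (\<forall>a. in_val_ring_poly v (conj_tp p y (\<phi> a))) \<and>
     (\<forall>a. a \<noteq> 0 \<longrightarrow> lead_coeff (conj_tp p y (\<phi> a)) \<noteq> 0 \<and>
                     v (lead_coeff (conj_tp p y (\<phi> a))) = 0)"

definition reduce :: "nat \<Rightarrow> ('l::field \<Rightarrow> 'k::field) \<Rightarrow> 'l \<Rightarrow> 'l poly \<Rightarrow> 'k poly" where
  "reduce p red y f = map_poly red (conj_tp p y f)"

definition reduction :: "nat \<Rightarrow> ('l::field \<Rightarrow> 'k::field) \<Rightarrow> 'l \<Rightarrow> ('a \<Rightarrow> 'l poly) \<Rightarrow> 'a \<Rightarrow> 'k poly" where
  "reduction p red y \<phi> = (\<lambda>a. reduce p red y (\<phi> a))"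

definition char_ideal :: "('a::comm_ring_1 \<Rightarrow> 'k::field poly) \<Rightarrow> 'a set" where
  "char_ideal \<psi> = {a. coeff (\<psi> a) 0 = 0}"

fun ideal_pow :: "'a::comm_ring_1 set \<Rightarrow> nat \<Rightarrow> 'a set" where
  "ideal_pow I 0 = UNIV"
| "ideal_pow I (Suc k) =
     {\<Sum>n<m. x n * z n | (m::nat) x z. (\<forall>n<m. x n \<in> I \<and> z n \<in> ideal_pow I k)}"

end

theory Submission
  imports Defs "HOL-Library.FuncSet" "Jordan_Normal_Form.Char_Poly"
begin

lemma tcoeff:
  assumes "p > 0"
  shows "coeff (tmult p f g) n = (\<Sum>i\<le>n. coeff f i * coeff g (n - i) ^ (p ^ i))"
proof -
  have "coeff (tmult p f g) n = (\<Sum>i\<le>degree f. (if n < i then 0 else coeff f i * coeff g (n - i) ^ (p ^ i)))"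
    unfolding tmult_def coeff_sum coeff_monom_mult
    using assms by (intro sum.cong refl) (simp add: coeff_map_poly)
  also have "\<dots> = (\<Sum>i\<in>{..degree f} \<union> {..n}. (if n < i then 0 else coeff f i * coeff g (n - i) ^ (p ^ i)))"
    by (rule sum.mono_neutral_left) (auto simp: coeff_eq_0)
  also have "\<dots> = (\<Sum>i\<le>n. (if n < i then 0 else coeff f i * coeff g (n - i) ^ (p ^ i)))"
    by (rule sum.mono_neutral_right) (auto simp: coeff_eq_0)
  also have "\<dots> = (\<Sum>i\<le>n. coeff f i * coeff g (n - i) ^ (p ^ i))"
    by (rule sum.cong) auto
  finally show ?thesis .
qed

lemma tmult_add_left:
  assumes "p > 0"
  shows "tmult p (f + g) h = tmult p f h + tmult p g h"
  by (rule poly_eqI) (simp add: tcoeff[OF assms] sum.distrib distrib_right)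

lemma tmult_diff_left:
  assumes "p > 0"
  shows "tmult p (f - g) h = tmult p f h - tmult p g h"
  by (rule poly_eqI) (simp add: tcoeff[OF assms] sum_subtractf left_diff_distrib)

lemma tmult_0_left[simp]: "p > 0 \<Longrightarrow> tmult p 0 h = 0"
  by (rule poly_eqI) (simp add: tcoeff)

lemma tmult_0_right[simp]: "p > 0 \<Longrightarrow> tmult p h 0 = 0"
  by (rule poly_eqI) (simp add: tcoeff zero_power)

lemma frob_add:
  assumes "CHAR('f::field) = p" "prime p"
  shows "((x::'f) + y) ^ (p ^ i) = x ^ (p ^ i) + y ^ (p ^ i)"
  using assms freshmans_dream' by blast

lemma frob_sum:
  assumes "CHAR('f::field) = p" "prime p"
  shows "(sum (F :: 'b \<Rightarrow> 'f) A) ^ (p ^ i) = (\<Sum>x\<in>A. F x ^ (p ^ i))"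
  using assms freshmans_dream_sum' by blast

lemma tmult_add_right:
  assumes "CHAR('f::field) = p" "prime p"
  shows "tmult p (h::'f poly) (f + g) = tmult p h f + tmult p h g"
proof -
  have p0: "p > 0" using assms prime_gt_0_nat by blast
  show ?thesis
    by (rule poly_eqI) (simp add: tcoeff[OF p0] frob_add[OF assms] sum.distrib distrib_left)
qed

lemma tmult_diff_right:
  assumes "CHAR('f::field) = p" "prime p"
  shows "tmult p (h::'f poly) (f - g) = tmult p h f - tmult p h g"
proof -
  have "tmult p h (f - g) + tmult p h g = tmult p h f"
    using tmult_add_right[OF assms, of h "f - g" g] by simp
  thus ?thesis by (simp add: eq_diff_eq)
qed

lemma tmult_one_left[simp]: assumes p: "p > 0" shows "tmult p 1 f = f"
proof (rule poly_eqI)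
  fix n
  have "coeff (tmult p 1 f) n = (\<Sum>i\<le>n. (if i = 0 then coeff f n else 0))"
    by (simp add: tcoeff[OF p] coeff_1 cong: sum.cong)
  also have "\<dots> = coeff f n" by (simp add: sum.delta)
  finally show "coeff (tmult p 1 f) n = coeff f n" .
qed

lemma tmult_one_right[simp]: assumes p: "p > 0" shows "tmult p f 1 = f"
proof (rule poly_eqI)
  fix n
  have "coeff (tmult p f 1) n = (\<Sum>i\<le>n. (if i = n then coeff f n else 0))"
    by (rule trans[OF tcoeff[OF p]], rule sum.cong) (auto simp: coeff_1 zero_power p)
  also have "\<dots> = coeff f n" by (simp add: sum.delta)
  finally show "coeff (tmult p f 1) n = coeff f n" .
qed

lemma tmult_assoc:
  assumes "CHAR('f::field) = p" "prime p"
  shows "tmult p (tmult p (f::'f poly) g) h = tmult p f (tmult p g h)"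
proof (rule poly_eqI)
  fix n
  have p0: "p > 0" using assms prime_gt_0_nat by blast
  define F where "F = (\<lambda>a b. coeff f a * coeff g b ^ (p ^ a) * coeff h (n - a - b) ^ (p ^ (a + b)))"
  have "coeff (tmult p (tmult p f g) h) n = (\<Sum>k\<le>n. (\<Sum>a\<le>k. coeff f a * coeff g (k - a) ^ (p ^ a)) * coeff h (n - k) ^ (p ^ k))"
    by (simp add: tcoeff[OF p0])
  also have "\<dots> = (\<Sum>k\<le>n. \<Sum>a\<le>k. F a (k - a))"
    by (rule sum.cong[OF refl], simp add: sum_distrib_right F_def)
  also have "\<dots> = (\<Sum>(a,b)\<in>{(a,b). a + b \<le> n}. F a b)"
    by (rule sum.triangle_reindex_eq[symmetric])
  also have "{(a,b). a + b \<le> n} = Sigma {..n} (\<lambda>a. {..n - a})" by auto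
  also have "(\<Sum>(a,b)\<in>Sigma {..n} (\<lambda>a. {..n - a}). F a b) = (\<Sum>a\<le>n. \<Sum>b\<le>n - a. F a b)"
    by (rule sum.Sigma[symmetric]) auto
  also have "\<dots> = coeff (tmult p f (tmult p g h)) n"
    by (simp add: tcoeff[OF p0] F_def frob_sum[OF assms] sum_distrib_left power_mult_distrib
        flip: power_mult power_add mult.assoc) (simp add: add.commute)
  finally show "coeff (tmult p (tmult p f g) h) n = coeff (tmult p f (tmult p g h)) n" .
qed

lemma tcoeff_high:
  assumes p: "p > 0" and n: "n \<ge> degree f + degree g"
  shows "coeff (tmult p f g) n = (if n = degree f + degree g then lead_coeff f * lead_coeff g ^ (p ^ degree f) else 0)"
proof -
  have "coeff (tmult p f g) n = (\<Sum>i\<le>n. (if i = degree f \<and> n = degree f + degree g then lead_coeff f * lead_coeff g ^ (p ^ degree f) else 0))"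
    unfolding tcoeff[OF p]
  proof (rule sum.cong[OF refl])
    fix i assume i: "i \<in> {..n}"
    show "coeff f i * coeff g (n - i) ^ p ^ i = (if i = degree f \<and> n = degree f + degree g then lead_coeff f * lead_coeff g ^ (p ^ degree f) else 0)"
    proof (cases "i = degree f \<and> n = degree f + degree g")
      case True thus ?thesis by simp
    next
      case False
      hence "i > degree f \<or> n - i > degree g" using n i by auto
      thus ?thesis using False p by (auto simp: coeff_eq_0 zero_power)
    qed
  qed
  also have "\<dots> = (if n = degree f + degree g then lead_coeff f * lead_coeff g ^ (p ^ degree f) else 0)"
    using n by (auto simp: sum.delta)
  finally show ?thesis .
qed

lemma tmult_nz:
  assumes p: "p > 0" and f: "(f::'f::field poly) \<noteq> 0" and g: "g \<noteq> 0"
  shows "tmult p f g \<noteq> 0" "degree (tmult p f g) = degree f + degree g"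
    "lead_coeff (tmult p f g) = lead_coeff f * lead_coeff g ^ (p ^ degree f)"
proof -
  have c: "coeff (tmult p f g) (degree f + degree g) = lead_coeff f * lead_coeff g ^ (p ^ degree f)"
    using tcoeff_high[OF p, where n="degree f + degree g" and f=f and g=g] by simp
  have nz: "lead_coeff f * lead_coeff g ^ (p ^ degree f) \<noteq> 0" using f g by simp
  have d1: "degree (tmult p f g) \<le> degree f + degree g"
    by (rule degree_le) (simp add: tcoeff_high[OF p])
  have d2: "degree f + degree g \<le> degree (tmult p f g)"
    by (rule le_degree) (use c nz in simp)
  show dd: "degree (tmult p f g) = degree f + degree g" using d1 d2 by simp
  show "tmult p f g \<noteq> 0" using c nz by auto
  show "lead_coeff (tmult p f g) = lead_coeff f * lead_coeff g ^ (p ^ degree f)"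
    using c dd by simp
qed

lemma tmult_eq_0_iff:
  assumes p: "p > 0"
  shows "tmult p (f::'f::field poly) g = 0 \<longleftrightarrow> f = 0 \<or> g = 0"
  using tmult_nz[OF p] p by auto

lemma tmult_cancel_right:
  assumes p: "p > 0" and h: "(h::'f::field poly) \<noteq> 0" and e: "tmult p f h = tmult p g h"
  shows "f = g"
proof -
  have "tmult p (f - g) h = 0" using e by (simp add: tmult_diff_left[OF p])
  thus ?thesis using tmult_eq_0_iff[OF p] h by (metis eq_iff_diff_eq_0)
qed

lemma tmult_const_left:
  assumes p: "p > 0"
  shows "coeff (tmult p [:z:] f) n = z * coeff f n"
proof -
  have "coeff (tmult p [:z:] f) n = (\<Sum>i\<le>n. (if i = 0 then z * coeff f n else 0))"
    unfolding tcoeff[OF p] by (rule sum.cong) (auto simp: coeff_pCons split: nat.splits)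
  thus ?thesis by (simp add: sum.delta)
qed

lemma tmult_const_right:
  assumes p: "p > 0"
  shows "coeff (tmult p f [:z:]) n = coeff f n * z ^ (p ^ n)"
proof -
  have "coeff (tmult p f [:z:]) n = (\<Sum>i\<le>n. (if i = n then coeff f n * z ^ (p ^ n) else 0))"
    unfolding tcoeff[OF p] by (rule sum.cong) (auto simp: coeff_pCons zero_power p split: nat.splits)
  thus ?thesis by (simp add: sum.delta)
qed

lemma conj_coeff:
  assumes p: "p > 0"
  shows "coeff (conj_tp p y f) n = inverse y * coeff f n * y ^ (p ^ n)"
  unfolding conj_tp_def by (simp add: tmult_const_left[OF p] tmult_const_right[OF p])

lemma conj_add: "p > 0 \<Longrightarrow> conj_tp p y (f + g) = conj_tp p y f + conj_tp p y g"
  by (rule poly_eqI) (simp add: conj_coeff algebra_simps)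

lemma conj_diff: "p > 0 \<Longrightarrow> conj_tp p y (f - g) = conj_tp p y f - conj_tp p y g"
  by (rule poly_eqI) (simp add: conj_coeff algebra_simps)

lemma conj_0[simp]: "p > 0 \<Longrightarrow> conj_tp p y 0 = 0"
  by (rule poly_eqI) (simp add: conj_coeff)

lemma conj_one: "p > 0 \<Longrightarrow> (y::'f::field) \<noteq> 0 \<Longrightarrow> conj_tp p y 1 = 1"
  by (rule poly_eqI) (case_tac n; simp add: conj_coeff coeff_1)

lemma conj_inv1:
  assumes p: "p > 0" and y: "(y::'f::field) \<noteq> 0"
  shows "conj_tp p (inverse y) (conj_tp p y f) = f"
proof (rule poly_eqI)
  fix n
  have e: "y ^ p ^ n * inverse y ^ p ^ n = 1" using y by (simp flip: power_mult_distrib)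
  have "inverse (inverse y) * (inverse y * coeff f n * y ^ p ^ n) * inverse y ^ p ^ n
      = (y * inverse y) * coeff f n * (y ^ p ^ n * inverse y ^ p ^ n)" by (simp only: mult_ac inverse_inverse_eq)
  also have "\<dots> = coeff f n" using e y by simp
  finally show "coeff (conj_tp p (inverse y) (conj_tp p y f)) n = coeff f n"
    by (simp add: conj_coeff[OF p])
qed

lemma conj_inv2:
  assumes p: "p > 0" and y: "(y::'f::field) \<noteq> 0"
  shows "conj_tp p y (conj_tp p (inverse y) f) = f"
proof -
  have "inverse y \<noteq> 0" using y by simp
  from conj_inv1[OF p this, of f] show ?thesis by (simp only: inverse_inverse_eq)
qed

lemma conj_inj:
  assumes p: "p > 0" and y: "(y::'f::field) \<noteq> 0" and e: "conj_tp p y f = conj_tp p y g"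
  shows "f = g"
  by (metis conj_inv1[OF p y] e)

lemma conj_mult:
  assumes ch: "CHAR('f::field) = p" "prime p" and y: "(y::'f) \<noteq> 0"
  shows "conj_tp p y (tmult p f g) = tmult p (conj_tp p y f) (conj_tp p y g)"
proof (rule poly_eqI)
  fix n
  have p: "p > 0" using ch prime_gt_0_nat by blast
  have "coeff (conj_tp p y (tmult p f g)) n = (\<Sum>i\<le>n. inverse y * (coeff f i * coeff g (n - i) ^ p ^ i) * y ^ p ^ n)"
    by (simp add: conj_coeff[OF p] tcoeff[OF p] sum_distrib_left sum_distrib_right)
  also have "\<dots> = (\<Sum>i\<le>n. inverse y * coeff f i * y ^ p ^ i * (inverse y * coeff g (n - i) * y ^ p ^ (n - i)) ^ p ^ i)"
  proof (rule sum.cong[OF refl])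
    fix i assume "i \<in> {..n}"
    hence "p ^ (n - i) * p ^ i = p ^ n" by (simp flip: power_add)
    hence e: "(y ^ p ^ (n - i)) ^ p ^ i = y ^ p ^ n" by (simp flip: power_mult)
    have e2: "y ^ p ^ i * inverse y ^ p ^ i = 1" using y by (simp flip: power_mult_distrib)
    show "inverse y * (coeff f i * coeff g (n - i) ^ p ^ i) * y ^ p ^ n = inverse y * coeff f i * y ^ p ^ i * (inverse y * coeff g (n - i) * y ^ p ^ (n - i)) ^ p ^ i"
    proof -
      have "inverse y * coeff f i * y ^ p ^ i * (inverse y * coeff g (n - i) * y ^ p ^ (n - i)) ^ p ^ i
          = inverse y * (coeff f i * coeff g (n - i) ^ p ^ i) * y ^ p ^ n * (y ^ p ^ i * inverse y ^ p ^ i)"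
        unfolding power_mult_distrib e by (simp only: mult_ac)
      thus ?thesis by (metis e2 mult_1_right)
    qed
  qed
  also have "\<dots> = coeff (tmult p (conj_tp p y f) (conj_tp p y g)) n"
    by (simp add: conj_coeff[OF p] tcoeff[OF p])
  finally show "coeff (conj_tp p y (tmult p f g)) n = coeff (tmult p (conj_tp p y f) (conj_tp p y g)) n" .
qed

lemma degree_eqI_coeff:
  assumes "\<And>n. coeff a n = 0 \<longleftrightarrow> coeff b n = 0"
  shows "degree a = degree b"
proof -
  have "degree a \<le> degree b" by (rule degree_le) (use assms coeff_eq_0 in auto)
  moreover have "degree b \<le> degree a" by (rule degree_le) (use assms coeff_eq_0 in auto)
  ultimately show ?thesis by simp
qed

lemma conj_degree:
  assumes p: "p > 0" and y: "(y::'f::field) \<noteq> 0"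
  shows "degree (conj_tp p y f) = degree f"
  by (rule degree_eqI_coeff) (simp add: conj_coeff[OF p] y)

lemma conj_zero_iff:
  assumes p: "p > 0" and y: "(y::'f::field) \<noteq> 0"
  shows "conj_tp p y f = 0 \<longleftrightarrow> f = 0"
  using conj_inj[OF p y, of f 0] p by auto

fun ntimes :: "nat \<Rightarrow> 'g::linordered_ab_group_add \<Rightarrow> 'g" where
  "ntimes 0 g = 0"
| "ntimes (Suc n) g = g + ntimes n g"

lemma ntimes_1[simp]: "ntimes 1 g = g" by simp

lemma ntimes_add: "ntimes (m + n) g = ntimes m g + ntimes n g"
  by (induct m) (simp_all add: add.assoc)

lemma ntimes_nonneg: "g \<ge> 0 \<Longrightarrow> ntimes n g \<ge> 0"
  by (induct n) simp_all

lemma ntimes_nonpos: "g \<le> 0 \<Longrightarrow> ntimes n g \<le> 0"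
  by (induct n) (simp_all add: add_nonpos_nonpos)

lemma ntimes_mono: "g \<le> h \<Longrightarrow> ntimes n g \<le> ntimes n h"
  by (induct n) (simp_all add: add_mono)

lemma ntimes_strict_mono: "g < h \<Longrightarrow> n > 0 \<Longrightarrow> ntimes n g < ntimes n h"
proof (induct n)
  case (Suc n) thus ?case
    using ntimes_mono[of g h n] by (cases n) (auto intro: add_less_le_mono)
qed simp

lemma ntimes_mono_n_pos: "g \<ge> 0 \<Longrightarrow> m \<le> n \<Longrightarrow> ntimes m g \<le> ntimes n g"
  using ntimes_add[of m "n - m" g] ntimes_nonneg[of g "n - m"] by simp

lemma ntimes_mono_n_neg: "g \<le> 0 \<Longrightarrow> m \<le> n \<Longrightarrow> ntimes n g \<le> ntimes m g"
  using ntimes_add[of m "n - m" g] ntimes_nonpos[of g "n - m"] by simp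

lemma ntimes_ge_self: "g \<ge> 0 \<Longrightarrow> n \<ge> 1 \<Longrightarrow> ntimes n g \<ge> g"
  using ntimes_mono_n_pos[of g 1 n] by simp

lemma ntimes_ge_double: "g \<ge> 0 \<Longrightarrow> n \<ge> 2 \<Longrightarrow> ntimes n g \<ge> g + g"
  using ntimes_mono_n_pos[of g 2 n] by (simp add: numeral_2_eq_2)

lemma ntimes_neg_lt: "g < 0 \<Longrightarrow> n \<ge> 2 \<Longrightarrow> ntimes n g < g"
proof -
  assume g: "g < 0" and n: "n \<ge> 2"
  have "ntimes n g \<le> ntimes 2 g" using ntimes_mono_n_neg[of g 2 n] g n by simp
  also have "ntimes 2 g = g + g" by (simp add: numeral_2_eq_2)
  also have "\<dots> < g" using g by simp
  finally show ?thesis .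
qed

locale valctx =
  fixes v :: "'l::field \<Rightarrow> 'g::linordered_ab_group_add"
  assumes valuation: "valuation v"
begin

lemma v_mult: "x \<noteq> 0 \<Longrightarrow> y \<noteq> 0 \<Longrightarrow> v (x * y) = v x + v y"
  using valuation unfolding valuation_def by blast

lemma v_add: "x \<noteq> 0 \<Longrightarrow> y \<noteq> 0 \<Longrightarrow> x + y \<noteq> 0 \<Longrightarrow> min (v x) (v y) \<le> v (x + y)"
  using valuation unfolding valuation_def by blast

lemma v_one[simp]: "v 1 = 0"
  using v_mult[of 1 1] by simp

lemma v_minus_one: "v (- 1) = 0"
proof -
  have h: "v (-1) + v (-1) = 0" using v_mult[of "-1" "-1"] by simp
  have "\<not> v (-1) > 0" using h add_pos_pos by fastforce
  moreover have "\<not> v (-1) < 0" using h add_neg_neg by fastforce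
  ultimately show ?thesis by simp
qed

lemma v_uminus[simp]: "v (- x) = v x"
proof (cases "x = 0")
  case False
  thus ?thesis using v_mult[of "-1" x] v_minus_one by simp
qed simp

lemma v_power: "x \<noteq> 0 \<Longrightarrow> v (x ^ n) = ntimes n (v x)"
  by (induct n) (simp_all add: v_mult)

lemma v_inverse: "x \<noteq> 0 \<Longrightarrow> v (inverse x) = - v x"
  using v_mult[of x "inverse x"] by (simp add: eq_neg_iff_add_eq_0 add.commute)

lemma v_diff: "x \<noteq> 0 \<Longrightarrow> y \<noteq> 0 \<Longrightarrow> x - y \<noteq> 0 \<Longrightarrow> min (v x) (v y) \<le> v (x - y)"
  using v_add[of x "- y"] by simp

lemma v_sum_ge:
  assumes "finite I" "\<And>i. i \<in> I \<Longrightarrow> t i = 0 \<or> v (t i) \<ge> c"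
  shows "sum t I = 0 \<or> v (sum t I) \<ge> c"
  using assms
proof (induct I rule: finite_induct)
  case (insert j I)
  have r: "sum t I = 0 \<or> v (sum t I) \<ge> c" using insert by auto
  have tj: "t j = 0 \<or> v (t j) \<ge> c" using insert by auto
  show ?case
  proof (cases "t j = 0 \<or> sum t I = 0 \<or> t j + sum t I = 0")
    case True
    have s: "sum t (insert j I) = t j + sum t I" using insert by simp
    show ?thesis using True r tj unfolding s by auto
  next
    case False
    hence "min (v (t j)) (v (sum t I)) \<le> v (t j + sum t I)" using v_add by blast
    moreover have s: "sum t (insert j I) = t j + sum t I" using insert by simp
    ultimately show ?thesis using False r tj unfolding s by (auto simp: min_def split: if_splits)
  qed
qed simp

lemma v_sum_gt:
  assumes "finite I" "\<And>i. i \<in> I \<Longrightarrow> t i = 0 \<or> v (t i) > c"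
  shows "sum t I = 0 \<or> v (sum t I) > c"
  using assms
proof (induct I rule: finite_induct)
  case (insert j I)
  have r: "sum t I = 0 \<or> v (sum t I) > c" using insert by auto
  have tj: "t j = 0 \<or> v (t j) > c" using insert by auto
  show ?case
  proof (cases "t j = 0 \<or> sum t I = 0 \<or> t j + sum t I = 0")
    case True
    have s: "sum t (insert j I) = t j + sum t I" using insert by simp
    show ?thesis using True r tj unfolding s by auto
  next
    case False
    hence "min (v (t j)) (v (sum t I)) \<le> v (t j + sum t I)" using v_add by blast
    moreover have s: "sum t (insert j I) = t j + sum t I" using insert by simp
    ultimately show ?thesis using False r tj unfolding s by (auto simp: min_def split: if_splits)
  qed
qed simp

lemma v_add_dominant:
  assumes x: "x \<noteq> 0" and r: "r = 0 \<or> v r > v x"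
  shows "x + r \<noteq> 0 \<and> v (x + r) = v x"
proof (cases "r = 0")
  case False
  hence vr: "v r > v x" using r by auto
  have nz: "x + r \<noteq> 0"
  proof
    assume "x + r = 0"
    hence "r = - x" by (simp add: eq_neg_iff_add_eq_0 add.commute)
    thus False using vr by simp
  qed
  have "min (v x) (v r) \<le> v (x + r)" using v_add[OF x False nz] .
  hence ge: "v x \<le> v (x + r)" using vr by simp
  have "min (v (x + r)) (v r) \<le> v ((x + r) - r)" using v_diff[OF nz False] x by simp
  hence "min (v (x + r)) (v r) \<le> v x" by simp
  hence "v (x + r) \<le> v x" using vr by (auto simp: min_def split: if_splits)
  thus ?thesis using ge nz by simp
qed (use x in simp)

lemma v_sum_dominant:
  assumes "finite I" "j \<in> I" "t j \<noteq> 0" "\<And>i. i \<in> I \<Longrightarrow> i \<noteq> j \<Longrightarrow> t i = 0 \<or> v (t i) > v (t j)"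
  shows "sum t I \<noteq> 0 \<and> v (sum t I) = v (t j)"
proof -
  have s: "sum t I = t j + sum t (I - {j})" using assms by (simp add: sum.remove)
  have "sum t (I - {j}) = 0 \<or> v (sum t (I - {j})) > v (t j)"
    by (rule v_sum_gt) (use assms in auto)
  from v_add_dominant[OF assms(3) this] s show ?thesis by simp
qed

end

lemma ntimes_0_right[simp]: "ntimes n (0::'g::linordered_ab_group_add) = 0"
  by (induct n) simp_all

context valctx
begin

lemma vr_0[simp]: "0 \<in> val_ring v" by (simp add: val_ring_def)
lemma vr_1[simp]: "1 \<in> val_ring v" by (simp add: val_ring_def)
lemma vi_0[simp]: "0 \<in> val_ideal v" by (simp add: val_ideal_def)

lemma vr_add: assumes "x \<in> val_ring v" "y \<in> val_ring v" shows "x + y \<in> val_ring v"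
proof (cases "x = 0 \<or> y = 0 \<or> x + y = 0")
  case True thus ?thesis using assms by (auto simp: val_ring_def)
next
  case False
  hence "min (v x) (v y) \<le> v (x + y)" using v_add by blast
  moreover have "0 \<le> v x" "0 \<le> v y" using assms False by (auto simp: val_ring_def)
  ultimately show ?thesis by (auto simp: val_ring_def min_def split: if_splits)
qed

lemma vr_mult: assumes "x \<in> val_ring v" "y \<in> val_ring v" shows "x * y \<in> val_ring v"
proof (cases "x = 0 \<or> y = 0")
  case True thus ?thesis by (auto simp: val_ring_def)
next
  case False
  hence "v (x * y) = v x + v y" using v_mult by blast
  moreover have "0 \<le> v x" "0 \<le> v y" using assms False by (auto simp: val_ring_def)
  ultimately show ?thesis by (auto simp: val_ring_def)
qed

lemma vr_uminus: "x \<in> val_ring v \<Longrightarrow> - x \<in> val_ring v"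
  unfolding val_ring_def by auto

lemma vr_diff: "x \<in> val_ring v \<Longrightarrow> y \<in> val_ring v \<Longrightarrow> x - y \<in> val_ring v"
  using vr_add[of x "- y"] vr_uminus[of y] by simp

lemma vr_sum: "(\<And>i. i \<in> I \<Longrightarrow> t i \<in> val_ring v) \<Longrightarrow> sum t I \<in> val_ring v"
  by (induct I rule: infinite_finite_induct) (auto intro: vr_add)

lemma vr_power: "x \<in> val_ring v \<Longrightarrow> x ^ n \<in> val_ring v"
  by (induct n) (auto intro: vr_mult)

lemma vi_add: assumes "x \<in> val_ideal v" "y \<in> val_ideal v" shows "x + y \<in> val_ideal v"
proof (cases "x = 0 \<or> y = 0 \<or> x + y = 0")
  case True thus ?thesis using assms by (auto simp: val_ideal_def)
next
  case False
  hence "min (v x) (v y) \<le> v (x + y)" using v_add by blast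
  moreover have "0 < v x" "0 < v y" using assms False by (auto simp: val_ideal_def)
  ultimately show ?thesis by (auto simp: val_ideal_def min_def split: if_splits)
qed

lemma vi_vr: "x \<in> val_ideal v \<Longrightarrow> x \<in> val_ring v"
  unfolding val_ideal_def val_ring_def by auto

lemma vi_mult: assumes "x \<in> val_ideal v" "y \<in> val_ring v" shows "x * y \<in> val_ideal v"
proof (cases "x = 0 \<or> y = 0")
  case True thus ?thesis by (auto simp: val_ideal_def)
next
  case False
  hence "v (x * y) = v x + v y" using v_mult by blast
  moreover have "0 < v x" "0 \<le> v y" using assms False by (auto simp: val_ring_def val_ideal_def)
  ultimately show ?thesis by (auto simp: val_ideal_def add_pos_nonneg)
qed

lemma vi_mult2: "x \<in> val_ring v \<Longrightarrow> y \<in> val_ideal v \<Longrightarrow> x * y \<in> val_ideal v"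
  using vi_mult[of y x] by (simp add: mult.commute)

lemma vi_uminus: "x \<in> val_ideal v \<Longrightarrow> - x \<in> val_ideal v"
  unfolding val_ideal_def by auto

lemma vi_diff: "x \<in> val_ideal v \<Longrightarrow> y \<in> val_ideal v \<Longrightarrow> x - y \<in> val_ideal v"
  using vi_add[of x "- y"] vi_uminus[of y] by simp

lemma vi_sum: "(\<And>i. i \<in> I \<Longrightarrow> t i \<in> val_ideal v) \<Longrightarrow> sum t I \<in> val_ideal v"
  by (induct I rule: infinite_finite_induct) (auto intro: vi_add)

lemma unit_props:
  assumes "x \<in> val_ring v" "x \<notin> val_ideal v"
  shows "x \<noteq> 0" "v x = 0" "inverse x \<in> val_ring v" "inverse x \<notin> val_ideal v"
  using assms unfolding val_ring_def val_ideal_def by (auto simp: v_inverse)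

lemma unitI: "x \<noteq> 0 \<Longrightarrow> v x = 0 \<Longrightarrow> x \<in> val_ring v \<and> x \<notin> val_ideal v"
  unfolding val_ring_def val_ideal_def by auto

lemma unit_power: "x \<in> val_ring v \<Longrightarrow> x \<notin> val_ideal v \<Longrightarrow> x ^ n \<in> val_ring v \<and> x ^ n \<notin> val_ideal v"
  using unit_props[of x] unitI[of "x ^ n"] by (simp add: v_power)

end

locale redctx = valctx v for v :: "'l::field \<Rightarrow> 'g::linordered_ab_group_add" +
  fixes red :: "'l \<Rightarrow> 'k::field"
  assumes resid: "residue_map v red"
begin

lemma red_1[simp]: "red 1 = 1" using resid by (simp add: residue_map_def)

lemma red_add: "x \<in> val_ring v \<Longrightarrow> y \<in> val_ring v \<Longrightarrow> red (x + y) = red x + red y"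
  using resid by (simp add: residue_map_def)

lemma red_mult: "x \<in> val_ring v \<Longrightarrow> y \<in> val_ring v \<Longrightarrow> red (x * y) = red x * red y"
  using resid by (simp add: residue_map_def)

lemma red_zero_iff: "x \<in> val_ring v \<Longrightarrow> red x = 0 \<longleftrightarrow> x \<in> val_ideal v"
  using resid by (simp add: residue_map_def)

lemma red_surj: "\<exists>x \<in> val_ring v. red x = z"
  using resid unfolding residue_map_def by (metis UNIV_I imageE)

lemma red_0[simp]: "red 0 = 0"
proof -
  have "red 0 + 0 = red 0 + red 0" using red_add[of 0 0] by simp
  thus ?thesis by (metis add_left_cancel)
qed

lemma red_uminus: "x \<in> val_ring v \<Longrightarrow> red (- x) = - red x"
  using red_add[of x "- x"] vr_uminus[of x] by (simp add: eq_neg_iff_add_eq_0 add.commute)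

lemma red_diff: "x \<in> val_ring v \<Longrightarrow> y \<in> val_ring v \<Longrightarrow> red (x - y) = red x - red y"
  using red_add[of x "- y"] vr_uminus[of y] red_uminus[of y] by simp

lemma red_sum: "(\<And>i. i \<in> I \<Longrightarrow> t i \<in> val_ring v) \<Longrightarrow> red (sum t I) = (\<Sum>i\<in>I. red (t i))"
  by (induct I rule: infinite_finite_induct) (auto simp: red_add vr_sum)

lemma red_power: "x \<in> val_ring v \<Longrightarrow> red (x ^ n) = red x ^ n"
  by (induct n) (auto simp: red_mult vr_power)

lemma red_of_nat: "red (of_nat n) = of_nat n"
proof (induct n)
  case (Suc n)
  have "of_nat n \<in> val_ring v" by (induct n) (auto intro: vr_add)
  thus ?case using Suc red_add[of 1 "of_nat n"] by (simp add: add.commute)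
qed simp

lemma CHAR_red:
  assumes "CHAR('l) = p" "prime p"
  shows "CHAR('k) = p"
proof -
  have "of_nat CHAR('l) = (0::'l)" by (rule of_nat_CHAR)
  hence "of_nat p = (0::'l)" using assms by simp
  hence "of_nat p = (0::'k)" using red_of_nat[of p] by simp
  hence "CHAR('k) dvd p" by (simp add: of_nat_eq_0_iff_char_dvd)
  moreover have "CHAR('k) \<noteq> Suc 0" by simp
  moreover from assms(2) have "\<forall>m. m dvd p \<longrightarrow> m = 1 \<or> m = p" by (simp add: prime_nat_iff)
  ultimately show ?thesis by (metis One_nat_def)
qed

end

lemma extreme_index_max:
  fixes f :: "nat \<Rightarrow> 'g::linorder"
  assumes "finite S" "S \<noteq> {}"
  shows "\<exists>J\<in>S. (\<forall>k\<in>S. f J \<le> f k) \<and> (\<forall>k\<in>S. k > J \<longrightarrow> f J < f k)"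
proof -
  define m where "m = Min (f ` S)"
  define T where "T = {k\<in>S. f k = m}"
  have mS: "m \<in> f ` S" unfolding m_def using assms by simp
  hence T: "finite T" "T \<noteq> {}" unfolding T_def using assms by auto
  define J where "J = Max T"
  have JT: "J \<in> T" unfolding J_def using T by simp
  have le: "\<forall>k\<in>S. m \<le> f k" unfolding m_def using assms by simp
  show ?thesis
  proof (intro bexI conjI ballI impI)
    show "J \<in> S" using JT T_def by simp
    fix k assume k: "k \<in> S"
    show "f J \<le> f k" using JT le k T_def by simp
    assume "J < k"
    hence "k \<notin> T" unfolding J_def using T Max_ge[of T k] by fastforce
    thus "f J < f k" using JT le k T_def by (auto simp: order.order_iff_strict)
  qed
qed

lemma extreme_index_min:
  fixes f :: "nat \<Rightarrow> 'g::linorder"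
  assumes "finite S" "S \<noteq> {}"
  shows "\<exists>J\<in>S. (\<forall>k\<in>S. f J \<le> f k) \<and> (\<forall>k\<in>S. k < J \<longrightarrow> f J < f k)"
proof -
  define m where "m = Min (f ` S)"
  define T where "T = {k\<in>S. f k = m}"
  have mS: "m \<in> f ` S" unfolding m_def using assms by simp
  hence T: "finite T" "T \<noteq> {}" unfolding T_def using assms by auto
  define J where "J = Min T"
  have JT: "J \<in> T" unfolding J_def using T by simp
  have le: "\<forall>k\<in>S. m \<le> f k" unfolding m_def using assms by simp
  show ?thesis
  proof (intro bexI conjI ballI impI)
    show "J \<in> S" using JT T_def by simp
    fix k assume k: "k \<in> S"
    show "f J \<le> f k" using JT le k T_def by simp
    assume "k < J"
    hence "k \<notin> T" unfolding J_def using T Min_le[of T k] by fastforce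
    thus "f J < f k" using JT le k T_def by (auto simp: order.order_iff_strict)
  qed
qed

lemma support_finite: "finite {i. coeff h i \<noteq> 0}"
proof -
  have "{i. coeff h i \<noteq> 0} \<subseteq> {..degree h}" using le_degree by fastforce
  thus ?thesis using finite_subset by blast
qed

lemma support_ne: "h \<noteq> 0 \<Longrightarrow> {i. coeff h i \<noteq> 0} \<noteq> {}"
  using leading_coeff_neq_0 by blast

lemma ntimes_pos_lt0: "(g::'g::linordered_ab_group_add) < 0 \<Longrightarrow> n > 0 \<Longrightarrow> ntimes n g < 0"
  using ntimes_strict_mono[of g 0 n] by simp

lemma N1:
  fixes x mu :: "'g::linordered_ab_group_add"
  assumes "x > mu" "mu < 0" "i < d" "p \<ge> 2"
  shows "ntimes (p ^ i) x > ntimes (p ^ d) mu"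
proof (cases "x \<ge> 0")
  case True
  have "ntimes (p ^ d) mu < 0" using ntimes_pos_lt0[OF assms(2)] assms(4) by simp
  thus ?thesis using ntimes_nonneg[OF True, of "p ^ i"] by simp
next
  case False
  have pi: "p ^ i \<le> p ^ d" using assms by (intro power_increasing) auto
  have "ntimes (p ^ d) x \<le> ntimes (p ^ i) x" using ntimes_mono_n_neg[OF _ pi, of x] False by simp
  moreover have "ntimes (p ^ d) mu < ntimes (p ^ d) x" using ntimes_strict_mono[OF assms(1)] assms(4) by simp
  ultimately show ?thesis by simp
qed

context valctx
begin

abbreviation ivr :: "'l poly \<Rightarrow> bool" where "ivr f \<equiv> in_val_ring_poly v f"
definition ivi :: "'l poly \<Rightarrow> bool" where "ivi f \<longleftrightarrow> (\<forall>i. coeff f i \<in> val_ideal v)"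

lemma vr_nonneg: "x \<in> val_ring v \<Longrightarrow> x \<noteq> 0 \<Longrightarrow> v x \<ge> 0"
  by (simp add: val_ring_def)

lemma vi_pos: "x \<in> val_ideal v \<Longrightarrow> x \<noteq> 0 \<Longrightarrow> v x > 0"
  by (simp add: val_ideal_def)

lemma v_term_ge_left:
  assumes "x \<noteq> 0" "y \<in> val_ring v" "y \<noteq> 0"
  shows "v (x * y ^ n) \<ge> v x"
proof -
  have "y ^ n \<in> val_ring v" "y ^ n \<noteq> 0" using assms vr_power by auto
  thus ?thesis using v_mult[of x "y ^ n"] assms vr_nonneg by fastforce
qed

lemma v_term_ge_right:
  assumes "x \<in> val_ring v" "x \<noteq> 0" "y \<noteq> 0"
  shows "v (x * y ^ n) \<ge> ntimes n (v y)"
  using v_mult[of x "y ^ n"] assms vr_nonneg v_power by fastforce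

lemma integral_commuting:
  assumes p: "p \<ge> 2" and B: "ivr B" and dB: "degree B \<ge> 1"
    and lcB: "v (lead_coeff B) = 0" and comm: "tmult p g B = tmult p B g"
  shows "ivr g"
proof (rule ccontr)
  assume nI: "\<not> ivr g"
  have p0: "p > 0" using p by simp
  define d where "d = degree B"
  define S where "S = {i. coeff g i \<noteq> 0}"
  have gnz: "g \<noteq> 0" using nI by (auto simp: in_val_ring_poly_def)
  obtain J where J: "J \<in> S" "\<forall>k\<in>S. v (coeff g J) \<le> v (coeff g k)"
      "\<forall>k\<in>S. k > J \<longrightarrow> v (coeff g J) < v (coeff g k)"
    using extreme_index_max[of S "\<lambda>i. v (coeff g i)"] support_finite[of g] support_ne[OF gnz]
    unfolding S_def by blast
  define mu where "mu = v (coeff g J)"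
  have gJ: "coeff g J \<noteq> 0" using J S_def by simp
  have mu0: "mu < 0"
  proof -
    obtain i where "coeff g i \<notin> val_ring v" using nI by (auto simp: in_val_ring_poly_def)
    hence "coeff g i \<noteq> 0" "v (coeff g i) < 0" by (auto simp: val_ring_def)
    moreover have "i \<in> S" using \<open>coeff g i \<noteq> 0\<close> S_def by simp
    ultimately show ?thesis using J(2) mu_def by fastforce
  qed
  have Bd: "coeff B d \<noteq> 0" using dB d_def by (metis leading_coeff_0_iff not_one_le_zero degree_0)
  have Bvr: "\<And>i. coeff B i \<in> val_ring v" using B by (simp add: in_val_ring_poly_def)
  define n where "n = J + d"
  have "coeff (tmult p B g) n \<noteq> 0 \<and> v (coeff (tmult p B g) n) = v (coeff B d * coeff g (n - d) ^ p ^ d)"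
    unfolding tcoeff[OF p0]
  proof (rule v_sum_dominant[where t="\<lambda>i. coeff B i * coeff g (n - i) ^ p ^ i"])
    show "d \<in> {..n}" by (simp add: n_def)
    show "coeff B d * coeff g (n - d) ^ p ^ d \<noteq> 0" using Bd gJ by (simp add: n_def)
    fix i assume i: "i \<in> {..n}" "i \<noteq> d"
    show "coeff B i * coeff g (n - i) ^ p ^ i = 0 \<or>
          v (coeff B d * coeff g (n - d) ^ p ^ d) < v (coeff B i * coeff g (n - i) ^ p ^ i)"
    proof (cases "coeff B i * coeff g (n - i) ^ p ^ i = 0")
      case False
      hence Bi: "coeff B i \<noteq> 0" and gi: "coeff g (n - i) \<noteq> 0" using p0 by auto
      have "i \<le> d" using Bi le_degree d_def by blast
      hence id: "i < d" using i by simp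
      hence gt: "n - i > J" by (simp add: n_def)
      hence vgt: "v (coeff g (n - i)) > mu" using J(3) gi S_def mu_def by auto
      have "v (coeff B d * coeff g (n - d) ^ p ^ d) = ntimes (p ^ d) mu"
        using v_mult[of "coeff B d" "coeff g J ^ p ^ d"] Bd gJ lcB d_def v_power mu_def
        by (simp add: n_def)
      also have "\<dots> < ntimes (p ^ i) (v (coeff g (n - i)))" using N1[OF vgt mu0 id p] .
      also have "\<dots> \<le> v (coeff B i * coeff g (n - i) ^ p ^ i)"
        using v_term_ge_right[OF Bvr Bi gi] .
      finally show ?thesis by simp
    qed simp
  qed simp
  hence c1: "coeff (tmult p B g) n \<noteq> 0" "v (coeff (tmult p B g) n) = ntimes (p ^ d) mu"
    unfolding n_def using v_mult[of "coeff B d" "coeff g J ^ p ^ d"] Bd gJ lcB d_def v_power mu_def by auto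
  have "coeff (tmult p g B) n = 0 \<or> v (coeff (tmult p g B) n) \<ge> mu"
    unfolding tcoeff[OF p0]
  proof (rule v_sum_ge)
    fix i assume i: "i \<in> {..n}"
    show "coeff g i * coeff B (n - i) ^ p ^ i = 0 \<or> mu \<le> v (coeff g i * coeff B (n - i) ^ p ^ i)"
    proof (cases "coeff g i * coeff B (n - i) ^ p ^ i = 0")
      case False
      hence gi: "coeff g i \<noteq> 0" and Bi: "coeff B (n - i) \<noteq> 0" using p0 by auto
      have "mu \<le> v (coeff g i)" using J(2) gi S_def mu_def by auto
      also have "\<dots> \<le> v (coeff g i * coeff B (n - i) ^ p ^ i)" using v_term_ge_left[OF gi Bvr Bi] .
      finally show ?thesis by simp
    qed simp
  qed simp
  hence "v (coeff (tmult p B g) n) \<ge> mu" using c1 comm by simp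
  moreover have "ntimes (p ^ d) mu < mu"
  proof -
    have "p ^ 1 \<le> p ^ d" using p dB d_def by (intro power_increasing) auto
    hence "p ^ d \<ge> 2" using p by simp
    thus ?thesis using ntimes_neg_lt[OF mu0] by simp
  qed
  ultimately show False using c1 by simp
qed

end

context valctx
begin

lemma ntimes_double_gt:
  assumes "x > 0" "n \<ge> 2" "mu \<le> x"
  shows "ntimes n x > mu"
proof -
  have "ntimes n x \<ge> x + x" using ntimes_ge_double[of x n] assms by simp
  moreover have "x + x > x" using assms by simp
  ultimately have "ntimes n x > x" by (meson less_le_trans)
  thus ?thesis using assms(3) by simp
qed

lemma p_pow_ge2: "p \<ge> 2 \<Longrightarrow> i \<ge> 1 \<Longrightarrow> p ^ i \<ge> (2::nat)"
proof -
  assume "p \<ge> 2" "i \<ge> 1"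
  hence "p ^ 1 \<le> p ^ i" by (intro power_increasing) auto
  thus ?thesis using \<open>p \<ge> 2\<close> by simp
qed

lemma ideal_commuting_zero:
  assumes p: "p \<ge> 2" and B: "ivr B" and dB: "degree B \<ge> 1"
    and lcB: "v (lead_coeff B) = 0" and comm: "tmult p h B = tmult p B h"
    and hI: "ivi h"
  shows "h = 0"
proof (rule ccontr)
  assume hnz: "h \<noteq> 0"
  have p0: "p > 0" using p by simp
  define d where "d = degree B"
  define S where "S = {i. coeff h i \<noteq> 0}"
  obtain J where J: "J \<in> S" "\<forall>k\<in>S. v (coeff h J) \<le> v (coeff h k)"
      "\<forall>k\<in>S. k > J \<longrightarrow> v (coeff h J) < v (coeff h k)"
    using extreme_index_max[of S "\<lambda>i. v (coeff h i)"] support_finite[of h] support_ne[OF hnz]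
    unfolding S_def by blast
  define mu where "mu = v (coeff h J)"
  have hJ: "coeff h J \<noteq> 0" using J S_def by simp
  have mu0: "mu > 0" using hI hJ vi_pos mu_def by (simp add: ivi_def)
  have Bd: "coeff B d \<noteq> 0" using dB d_def by (metis leading_coeff_0_iff not_one_le_zero degree_0)
  have Bvr: "\<And>i. coeff B i \<in> val_ring v" using B by (simp add: in_val_ring_poly_def)
  define n where "n = J + d"
  have "coeff (tmult p h B) n \<noteq> 0 \<and> v (coeff (tmult p h B) n) = v (coeff h J * coeff B (n - J) ^ p ^ J)"
    unfolding tcoeff[OF p0]
  proof (rule v_sum_dominant[where t="\<lambda>i. coeff h i * coeff B (n - i) ^ p ^ i"])
    show "J \<in> {..n}" by (simp add: n_def)
    show "coeff h J * coeff B (n - J) ^ p ^ J \<noteq> 0" using Bd hJ by (simp add: n_def)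
    fix i assume i: "i \<in> {..n}" "i \<noteq> J"
    show "coeff h i * coeff B (n - i) ^ p ^ i = 0 \<or>
          v (coeff h J * coeff B (n - J) ^ p ^ J) < v (coeff h i * coeff B (n - i) ^ p ^ i)"
    proof (cases "coeff h i * coeff B (n - i) ^ p ^ i = 0")
      case False
      hence hi: "coeff h i \<noteq> 0" and Bi: "coeff B (n - i) \<noteq> 0" using p0 by auto
      have "n - i \<le> d" using Bi le_degree d_def by blast
      hence gt: "i > J" using i by (simp add: n_def)
      hence vgt: "v (coeff h i) > mu" using J(3) hi S_def mu_def by auto
      have "v (coeff h J * coeff B (n - J) ^ p ^ J) = mu"
        using v_mult[of "coeff h J" "coeff B d ^ p ^ J"] Bd hJ lcB d_def v_power mu_def
        by (simp add: n_def)
      also have "\<dots> < v (coeff h i)" using vgt .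
      also have "\<dots> \<le> v (coeff h i * coeff B (n - i) ^ p ^ i)"
        using v_term_ge_left[OF hi Bvr Bi] .
      finally show ?thesis by simp
    qed simp
  qed simp
  hence c1: "coeff (tmult p h B) n \<noteq> 0" "v (coeff (tmult p h B) n) = mu"
    unfolding n_def using v_mult[of "coeff h J" "coeff B d ^ p ^ J"] Bd hJ lcB d_def v_power mu_def by auto
  have "coeff (tmult p B h) n = 0 \<or> v (coeff (tmult p B h) n) > mu"
    unfolding tcoeff[OF p0]
  proof (rule v_sum_gt)
    fix i assume i: "i \<in> {..n}"
    show "coeff B i * coeff h (n - i) ^ p ^ i = 0 \<or> mu < v (coeff B i * coeff h (n - i) ^ p ^ i)"
    proof (cases "coeff B i * coeff h (n - i) ^ p ^ i = 0")
      case False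
      hence Bi: "coeff B i \<noteq> 0" and hi: "coeff h (n - i) \<noteq> 0" using p0 by auto
      have vh: "v (coeff h (n - i)) > 0" using hI hi vi_pos by (simp add: ivi_def)
      have muh: "mu \<le> v (coeff h (n - i))" using J(2) hi S_def mu_def by auto
      show ?thesis
      proof (cases "i = 0")
        case True
        hence "n - i > J" using dB d_def by (simp add: n_def)
        hence "v (coeff h (n - i)) > mu" using J(3) hi S_def mu_def by auto
        also have "v (coeff h (n - i)) \<le> v (coeff B i * coeff h (n - i) ^ p ^ i)"
          using True v_mult[of "coeff B 0" "coeff h n"] Bi hi vr_nonneg[OF Bvr Bi] by simp
        finally show ?thesis by simp
      next
        case False
        have "mu < ntimes (p ^ i) (v (coeff h (n - i)))"
          using ntimes_double_gt[OF vh p_pow_ge2[OF p] muh] False by simp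
        also have "\<dots> \<le> v (coeff B i * coeff h (n - i) ^ p ^ i)" using v_term_ge_right[OF Bvr Bi hi] .
        finally show ?thesis by simp
      qed
    qed simp
  qed simp
  thus False using c1 comm by simp
qed

lemma separable_remainder_zero:
  assumes p: "p \<ge> 2" and B: "ivr B" and Bnz: "B \<noteq> 0"
    and lcB: "v (lead_coeff B) = 0" and c0B: "coeff B 0 \<noteq> 0" "v (coeff B 0) = 0"
    and rI: "ivi r" and rdeg: "r = 0 \<or> degree r < degree B"
    and rel: "tmult p B r = tmult p s B"
  shows "r = 0"
proof (rule ccontr)
  assume rnz: "r \<noteq> 0"
  have p0: "p > 0" using p by simp
  define d where "d = degree B"
  have rd: "degree r < d" using rdeg rnz d_def by simp
  have snz: "s \<noteq> 0"
  proof
    assume "s = 0"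
    hence "tmult p B r = 0" using rel p0 by simp
    thus False using tmult_eq_0_iff[OF p0, of B r] Bnz rnz by blast
  qed
  have Bd: "coeff B d \<noteq> 0" using Bnz d_def by simp
  have Bvr: "\<And>i. coeff B i \<in> val_ring v" using B by (simp add: in_val_ring_poly_def)
  define S where "S = {i. coeff s i \<noteq> 0}"
  obtain K where K: "K \<in> S" "\<forall>k\<in>S. v (coeff s K) \<le> v (coeff s k)"
      "\<forall>k\<in>S. k > K \<longrightarrow> v (coeff s K) < v (coeff s k)"
    using extreme_index_max[of S "\<lambda>i. v (coeff s i)"] support_finite[of s] support_ne[OF snz]
    unfolding S_def by blast
  define nu where "nu = v (coeff s K)"
  have sK: "coeff s K \<noteq> 0" using K S_def by simp
  define R where "R = {i. coeff r i \<noteq> 0}"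
  obtain J where J: "J \<in> R" "\<forall>k\<in>R. v (coeff r J) \<le> v (coeff r k)"
      "\<forall>k\<in>R. k < J \<longrightarrow> v (coeff r J) < v (coeff r k)"
    using extreme_index_min[of R "\<lambda>i. v (coeff r i)"] support_finite[of r] support_ne[OF rnz]
    unfolding R_def by blast
  define mu where "mu = v (coeff r J)"
  have rJ: "coeff r J \<noteq> 0" using J R_def by simp
  have mu0: "mu > 0" using rI rJ vi_pos mu_def by (simp add: ivi_def)
  define n where "n = K + d"
  have "coeff (tmult p s B) n \<noteq> 0 \<and> v (coeff (tmult p s B) n) = v (coeff s K * coeff B (n - K) ^ p ^ K)"
    unfolding tcoeff[OF p0]
  proof (rule v_sum_dominant[where t="\<lambda>i. coeff s i * coeff B (n - i) ^ p ^ i"])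
    show "K \<in> {..n}" by (simp add: n_def)
    show "coeff s K * coeff B (n - K) ^ p ^ K \<noteq> 0" using Bd sK by (simp add: n_def)
    fix i assume i: "i \<in> {..n}" "i \<noteq> K"
    show "coeff s i * coeff B (n - i) ^ p ^ i = 0 \<or>
          v (coeff s K * coeff B (n - K) ^ p ^ K) < v (coeff s i * coeff B (n - i) ^ p ^ i)"
    proof (cases "coeff s i * coeff B (n - i) ^ p ^ i = 0")
      case False
      hence si: "coeff s i \<noteq> 0" and Bi: "coeff B (n - i) \<noteq> 0" using p0 by auto
      have "n - i \<le> d" using Bi le_degree d_def by blast
      hence gt: "i > K" using i by (simp add: n_def)
      hence vgt: "v (coeff s i) > nu" using K(3) si S_def nu_def by auto
      have "v (coeff s K * coeff B (n - K) ^ p ^ K) = nu"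
        using v_mult[of "coeff s K" "coeff B d ^ p ^ K"] Bd sK lcB d_def v_power nu_def
        by (simp add: n_def)
      also have "\<dots> < v (coeff s i)" using vgt .
      also have "\<dots> \<le> v (coeff s i * coeff B (n - i) ^ p ^ i)"
        using v_term_ge_left[OF si Bvr Bi] .
      finally show ?thesis by simp
    qed simp
  qed simp
  hence c1: "coeff (tmult p s B) n \<noteq> 0" "v (coeff (tmult p s B) n) = nu"
    unfolding n_def using v_mult[of "coeff s K" "coeff B d ^ p ^ K"] Bd sK lcB d_def v_power nu_def by auto
  have "coeff (tmult p B r) n = 0 \<or> v (coeff (tmult p B r) n) \<ge> mu + mu"
    unfolding tcoeff[OF p0]
  proof (rule v_sum_ge)
    fix i assume i: "i \<in> {..n}"
    show "coeff B i * coeff r (n - i) ^ p ^ i = 0 \<or> mu + mu \<le> v (coeff B i * coeff r (n - i) ^ p ^ i)"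
    proof (cases "coeff B i * coeff r (n - i) ^ p ^ i = 0")
      case False
      hence Bi: "coeff B i \<noteq> 0" and ri: "coeff r (n - i) \<noteq> 0" using p0 by auto
      have "n - i \<le> degree r" using ri le_degree by blast
      hence "i \<ge> 1" using rd by (simp add: n_def)
      have vr: "v (coeff r (n - i)) > 0" using rI ri vi_pos by (simp add: ivi_def)
      have mur: "mu \<le> v (coeff r (n - i))" using J(2) ri R_def mu_def by auto
      have "mu + mu \<le> v (coeff r (n - i)) + v (coeff r (n - i))" using mur by (simp add: add_mono)
      also have "\<dots> \<le> ntimes (p ^ i) (v (coeff r (n - i)))"
        using ntimes_ge_double[of "v (coeff r (n - i))" "p ^ i"] vr p_pow_ge2[OF p \<open>i \<ge> 1\<close>] by (simp add: less_imp_le)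
      also have "\<dots> \<le> v (coeff B i * coeff r (n - i) ^ p ^ i)" using v_term_ge_right[OF Bvr Bi ri] .
      finally show ?thesis by simp
    qed simp
  qed simp
  hence nuge: "nu \<ge> mu + mu" using c1 rel by simp
  have "coeff (tmult p B r) J \<noteq> 0 \<and> v (coeff (tmult p B r) J) = v (coeff B 0 * coeff r (J - 0) ^ p ^ 0)"
    unfolding tcoeff[OF p0]
  proof (rule v_sum_dominant[where t="\<lambda>i. coeff B i * coeff r (J - i) ^ p ^ i"])
    show "0 \<in> {..J}" by simp
    show "coeff B 0 * coeff r (J - 0) ^ p ^ 0 \<noteq> 0" using c0B rJ by simp
    fix i assume i: "i \<in> {..J}" "i \<noteq> 0"
    show "coeff B i * coeff r (J - i) ^ p ^ i = 0 \<or>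
          v (coeff B 0 * coeff r (J - 0) ^ p ^ 0) < v (coeff B i * coeff r (J - i) ^ p ^ i)"
    proof (cases "coeff B i * coeff r (J - i) ^ p ^ i = 0")
      case False
      hence Bi: "coeff B i \<noteq> 0" and ri: "coeff r (J - i) \<noteq> 0" using p0 by auto
      have vr: "v (coeff r (J - i)) > 0" using rI ri vi_pos by (simp add: ivi_def)
      have mur: "mu \<le> v (coeff r (J - i))" using J(2) ri R_def mu_def by auto
      have "v (coeff B 0 * coeff r (J - 0) ^ p ^ 0) = mu"
        using v_mult[of "coeff B 0" "coeff r J"] c0B rJ mu_def by simp
      also have "\<dots> < ntimes (p ^ i) (v (coeff r (J - i)))"
        using ntimes_double_gt[OF vr p_pow_ge2[OF p] mur] i by simp
      also have "\<dots> \<le> v (coeff B i * coeff r (J - i) ^ p ^ i)" using v_term_ge_right[OF Bvr Bi ri] .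
      finally show ?thesis by simp
    qed simp
  qed simp
  hence c2: "coeff (tmult p B r) J \<noteq> 0" "v (coeff (tmult p B r) J) = mu"
    using v_mult[of "coeff B 0" "coeff r J"] c0B rJ mu_def by auto
  have "coeff (tmult p s B) J = 0 \<or> v (coeff (tmult p s B) J) > mu"
    unfolding tcoeff[OF p0]
  proof (rule v_sum_gt)
    fix i assume i: "i \<in> {..J}"
    show "coeff s i * coeff B (J - i) ^ p ^ i = 0 \<or> mu < v (coeff s i * coeff B (J - i) ^ p ^ i)"
    proof (cases "coeff s i * coeff B (J - i) ^ p ^ i = 0")
      case False
      hence si: "coeff s i \<noteq> 0" and Bi: "coeff B (J - i) \<noteq> 0" using p0 by auto
      have "mu < mu + mu" using mu0 by simp
      also have "\<dots> \<le> nu" using nuge .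
      also have "\<dots> \<le> v (coeff s i)" using K(2) si S_def nu_def by auto
      also have "\<dots> \<le> v (coeff s i * coeff B (J - i) ^ p ^ i)" using v_term_ge_left[OF si Bvr Bi] .
      finally show ?thesis by simp
    qed simp
  qed simp
  thus False using c2 rel by simp
qed

end

context valctx
begin

lemma ivr_coeff: "ivr f \<Longrightarrow> coeff f i \<in> val_ring v"
  by (simp add: in_val_ring_poly_def)

lemma ivr_tmult: "p > 0 \<Longrightarrow> ivr f \<Longrightarrow> ivr g \<Longrightarrow> ivr (tmult p f g)"
  unfolding in_val_ring_poly_def by (simp add: tcoeff vr_sum vr_mult vr_power)

lemma ivr_add: "ivr f \<Longrightarrow> ivr g \<Longrightarrow> ivr (f + g)"
  unfolding in_val_ring_poly_def by (simp add: vr_add)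

lemma ivr_diff: "ivr f \<Longrightarrow> ivr g \<Longrightarrow> ivr (f - g)"
  unfolding in_val_ring_poly_def by (simp add: vr_diff)

lemma ivr_0[simp]: "ivr 0"
  unfolding in_val_ring_poly_def by simp

lemma ivr_monom: "c \<in> val_ring v \<Longrightarrow> ivr (monom c m)"
  unfolding in_val_ring_poly_def by (simp add: coeff_monom)

lemma ivi_ivr: "ivi f \<Longrightarrow> ivr f"
  unfolding in_val_ring_poly_def ivi_def by (simp add: vi_vr)

end

context redctx
begin

abbreviation mred :: "'l poly \<Rightarrow> 'k poly" where "mred f \<equiv> map_poly red f"

lemma mred_coeff: "coeff (mred f) n = red (coeff f n)"
  by (simp add: coeff_map_poly)

lemma mred_add: "ivr f \<Longrightarrow> ivr g \<Longrightarrow> mred (f + g) = mred f + mred g"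
  by (rule poly_eqI) (simp add: mred_coeff red_add ivr_coeff)

lemma mred_diff: "ivr f \<Longrightarrow> ivr g \<Longrightarrow> mred (f - g) = mred f - mred g"
  by (rule poly_eqI) (simp add: mred_coeff red_diff ivr_coeff)

lemma mred_tmult:
  assumes p: "p > 0" and f: "ivr f" and g: "ivr g"
  shows "mred (tmult p f g) = tmult p (mred f) (mred g)"
proof (rule poly_eqI)
  fix n
  show "coeff (mred (tmult p f g)) n = coeff (tmult p (mred f) (mred g)) n"
    unfolding mred_coeff tcoeff[OF p]
    by (subst red_sum) (auto simp: vr_mult vr_power ivr_coeff[OF f] ivr_coeff[OF g] red_mult red_power mred_coeff)
qed

lemma ivi_iff: "ivr f \<Longrightarrow> ivi f \<longleftrightarrow> mred f = 0"
  unfolding ivi_def by (auto simp: red_zero_iff ivr_coeff poly_eq_iff mred_coeff)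

lemma mred_degree:
  assumes f: "ivr f" "f \<noteq> 0" "v (lead_coeff f) = 0"
  shows "degree (mred f) = degree f" "lead_coeff (mred f) = red (lead_coeff f)" "mred f \<noteq> 0"
proof -
  have u: "red (lead_coeff f) \<noteq> 0"
    using unitI[of "lead_coeff f"] f red_zero_iff by simp
  have d1: "degree (mred f) \<le> degree f" by (rule degree_le) (simp add: mred_coeff coeff_eq_0)
  have d2: "degree f \<le> degree (mred f)" by (rule le_degree) (simp add: mred_coeff u)
  show dd: "degree (mred f) = degree f" using d1 d2 by simp
  show "lead_coeff (mred f) = red (lead_coeff f)" using dd by (simp add: mred_coeff)
  show "mred f \<noteq> 0" using u dd by (metis mred_coeff coeff_0)
qed

lemma mred_degree_le: "degree (mred f) \<le> degree f"
  by (rule degree_le) (simp add: mred_coeff coeff_eq_0)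

lemma division:
  assumes p: "p > 0" and B: "ivr B" "B \<noteq> 0" "v (lead_coeff B) = 0" and g: "ivr g"
  shows "\<exists>q r. ivr q \<and> ivr r \<and> g = tmult p q B + r \<and> (r = 0 \<or> degree r < degree B)"
  using g
proof (induction "degree g" arbitrary: g rule: less_induct)
  case less
  show ?case
  proof (cases "g = 0 \<or> degree g < degree B")
    case True
    thus ?thesis using less.prems by (intro exI[of _ 0] exI[of _ g]) (auto simp: p)
  next
    case False
    hence gnz: "g \<noteq> 0" and dg: "degree g \<ge> degree B" by auto
    define m where "m = degree g - degree B"
    have Bu: "lead_coeff B \<in> val_ring v" "lead_coeff B \<notin> val_ideal v"
      using unitI[of "lead_coeff B"] B by auto
    have Bup: "lead_coeff B ^ p ^ m \<in> val_ring v" "lead_coeff B ^ p ^ m \<notin> val_ideal v"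
      using unit_power[OF Bu] by auto
    define c where "c = lead_coeff g * inverse (lead_coeff B ^ p ^ m)"
    have cvr: "c \<in> val_ring v" unfolding c_def
      using vr_mult[OF ivr_coeff[OF less.prems] unit_props(3)[OF Bup]] by simp
    have cnz: "c \<noteq> 0" unfolding c_def using gnz B by simp
    define q0 where "q0 = monom c m"
    have q0nz: "q0 \<noteq> 0" using cnz q0_def by simp
    have dq0: "degree q0 = m" using cnz q0_def by (simp add: degree_monom_eq)
    have P: "degree (tmult p q0 B) = degree g" "lead_coeff (tmult p q0 B) = lead_coeff g"
      using tmult_nz[OF p q0nz B(2)] dq0 dg m_def q0_def cnz B c_def by (auto simp: field_simps)
    define g' where "g' = g - tmult p q0 B"
    have ivq0: "ivr q0" using cvr q0_def ivr_monom by simp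
    have ivg': "ivr g'" unfolding g'_def using ivr_diff[OF less.prems ivr_tmult[OF p ivq0 B(1)]] .
    have cg': "coeff g' (degree g) = 0" unfolding g'_def using P by simp
    have dg'le: "degree g' \<le> degree g" unfolding g'_def using P
      by (metis degree_diff_le le_refl)
    show ?thesis
    proof (cases "g' = 0")
      case True
      thus ?thesis using ivq0 g'_def by (intro exI[of _ q0] exI[of _ 0]) auto
    next
      case False
      have "degree g' \<noteq> degree g" using False cg' by (metis leading_coeff_0_iff)
      hence "degree g' < degree g" using dg'le by simp
      from less.hyps[OF this ivg'] obtain q r where qr: "ivr q" "ivr r" "g' = tmult p q B + r"
        "r = 0 \<or> degree r < degree B" by blast
      have "g = tmult p (q0 + q) B + r" using qr(3) g'_def by (simp add: tmult_add_left[OF p] algebra_simps)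
      thus ?thesis using qr ivr_add[OF ivq0 qr(1)] by blast
    qed
  qed
qed

end

definition Fp :: "'a::idom set" where "Fp = range of_int"

lemma of_nat_CHAR_eq: "CHAR('a::semiring_1) = p \<Longrightarrow> of_nat p = (0::'a)"
  by (metis of_nat_CHAR)

lemma Fp_0[simp]: "0 \<in> Fp"
proof -
  have "(0::'a) = of_int 0" by simp
  thus ?thesis unfolding Fp_def by (rule range_eqI)
qed

lemma Fp_1[simp]: "1 \<in> Fp"
proof -
  have "(1::'a) = of_int 1" by simp
  thus ?thesis unfolding Fp_def by (rule range_eqI)
qed

lemma Fp_add: assumes "x \<in> Fp" "y \<in> Fp" shows "x + y \<in> Fp"
proof -
  obtain a b where "x = of_int a" "y = of_int b" using assms unfolding Fp_def by auto
  hence "x + y = of_int (a + b)" by simp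
  thus ?thesis unfolding Fp_def by (rule range_eqI)
qed

lemma Fp_mult: assumes "x \<in> Fp" "y \<in> Fp" shows "x * y \<in> Fp"
proof -
  obtain a b where "x = of_int a" "y = of_int b" using assms unfolding Fp_def by auto
  hence "x * y = of_int (a * b)" by simp
  thus ?thesis unfolding Fp_def by (rule range_eqI)
qed

lemma Fp_uminus: assumes "x \<in> Fp" shows "- x \<in> Fp"
proof -
  obtain a where "x = of_int a" using assms unfolding Fp_def by auto
  hence "- x = of_int (- a)" by simp
  thus ?thesis unfolding Fp_def by (rule range_eqI)
qed

lemma Fp_of_nat: "of_nat n \<in> Fp"
proof -
  have "(of_nat n::'a) = of_int (int n)" by simp
  thus ?thesis unfolding Fp_def by (rule range_eqI)
qed

lemma of_int_mod_CHAR: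
  assumes "CHAR('a::idom) = p"
  shows "(of_int (c mod int p) :: 'a) = of_int c"
proof -
  have "c = int p * (c div int p) + c mod int p" by simp
  hence "(of_int c :: 'a) = of_int (int p) * of_int (c div int p) + of_int (c mod int p)"
    by (metis of_int_add of_int_mult)
  moreover have "(of_int (int p) :: 'a) = 0" using of_nat_CHAR_eq[OF assms] by simp
  ultimately show ?thesis by simp
qed

lemma Fp_finite:
  assumes "CHAR('a::idom) = p" "prime p"
  shows "finite (Fp :: 'a set)"
proof -
  have "(Fp :: 'a set) \<subseteq> of_int ` {0..<int p}"
  proof
    fix x :: 'a assume "x \<in> Fp"
    then obtain c where c: "x = of_int c" unfolding Fp_def by auto
    have "c mod int p \<in> {0..<int p}" using assms prime_gt_0_nat by auto
    thus "x \<in> of_int ` {0..<int p}" using c of_int_mod_CHAR[OF assms(1)] by (metis image_eqI)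
  qed
  thus ?thesis using finite_subset by blast
qed

lemma Fp_inverse:
  assumes "CHAR('a::idom) = p" "prime p" "(x::'a) \<in> Fp" "x \<noteq> 0"
  shows "\<exists>u\<in>Fp. u * x = 1"
proof -
  obtain c where c: "x = of_int c" using assms unfolding Fp_def by auto
  have nd: "\<not> int p dvd c"
  proof
    assume "int p dvd c"
    then obtain k where "c = int p * k" by auto
    hence "x = of_int (int p) * of_int k" using c by simp
    thus False using assms of_nat_CHAR_eq[OF assms(1)] by simp
  qed
  have "prime (int p)" using assms by simp
  hence "coprime (int p) c" using nd by (simp add: prime_imp_coprime)
  hence g: "gcd (int p) c = 1" by simp
  obtain u w where "u * int p + w * c = 1" using bezout_int[of "int p" c] g by auto
  hence "of_int (u * int p + w * c) = (1::'a)" by simp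
  hence "of_int u * of_int (int p) + of_int w * x = (1::'a)" using c by simp
  hence "of_int w * x = (1::'a)" using of_nat_CHAR_eq[OF assms(1)] by simp
  thus ?thesis unfolding Fp_def by blast
qed

definition Vset :: "'a::idom \<Rightarrow> nat \<Rightarrow> 'a set" where
  "Vset t D = {x. \<exists>e. (\<forall>i. e i \<in> Fp) \<and> x = (\<Sum>i<D. e i * t ^ i)}"

lemma Vset_finite:
  assumes "CHAR('a::idom) = p" "prime p"
  shows "finite (Vset (t::'a) D)"
proof -
  have "Vset t D \<subseteq> (\<lambda>e. \<Sum>i<D. e i * t ^ i) ` (PiE {..<D} (\<lambda>_. Fp))"
  proof
    fix x assume "x \<in> Vset t D"
    then obtain e where e: "\<forall>i. e i \<in> Fp" "x = (\<Sum>i<D. e i * t ^ i)" unfolding Vset_def by auto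
    have "restrict e {..<D} \<in> PiE {..<D} (\<lambda>_. Fp)" using e by (simp add: restrict_PiE_iff)
    moreover have "x = (\<Sum>i<D. restrict e {..<D} i * t ^ i)" using e by simp
    ultimately show "x \<in> (\<lambda>e. \<Sum>i<D. e i * t ^ i) ` (PiE {..<D} (\<lambda>_. Fp))" by blast
  qed
  moreover have "finite (PiE {..<D} (\<lambda>_. (Fp::'a set)))"
    using Fp_finite[OF assms] by (intro finite_PiE) auto
  ultimately show ?thesis using finite_subset by blast
qed

lemma Vset_0: "0 \<in> Vset t D"
  unfolding Vset_def by (rule CollectI, rule exI[of _ "\<lambda>_. 0"]) simp

lemma Vset_add: "x \<in> Vset t D \<Longrightarrow> y \<in> Vset t D \<Longrightarrow> x + y \<in> Vset t D"
  unfolding Vset_def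
proof (clarify)
  fix e e' :: "nat \<Rightarrow> 'a" assume "\<forall>i. e i \<in> Fp" "\<forall>i. e' i \<in> Fp"
  thus "\<exists>e''. (\<forall>i. e'' i \<in> Fp) \<and> (\<Sum>i<D. e i * t ^ i) + (\<Sum>i<D. e' i * t ^ i) = (\<Sum>i<D. e'' i * t ^ i)"
    by (intro exI[of _ "\<lambda>i. e i + e' i"]) (simp add: Fp_add sum.distrib distrib_right)
qed

lemma Vset_smult: "c \<in> Fp \<Longrightarrow> x \<in> Vset t D \<Longrightarrow> c * x \<in> Vset t D"
  unfolding Vset_def
proof (clarify)
  fix e :: "nat \<Rightarrow> 'a" assume "c \<in> Fp" "\<forall>i. e i \<in> Fp"
  thus "\<exists>e''. (\<forall>i. e'' i \<in> Fp) \<and> c * (\<Sum>i<D. e i * t ^ i) = (\<Sum>i<D. e'' i * t ^ i)"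
    by (intro exI[of _ "\<lambda>i. c * e i"]) (simp add: Fp_mult sum_distrib_left mult.assoc)
qed

lemma Vset_pow: "i < D \<Longrightarrow> t ^ i \<in> Vset t D"
  unfolding Vset_def
proof (rule CollectI, rule exI[of _ "\<lambda>j. if j = i then 1 else 0"], intro conjI)
  assume "i < D"
  show "t ^ i = (\<Sum>j<D. (if j = i then 1 else 0) * t ^ j)"
  proof -
    have "(\<Sum>j<D. (if j = i then 1 else 0) * t ^ j) = (\<Sum>j<D. if j = i then t ^ j else 0)"
      by (rule sum.cong) auto
    thus ?thesis using \<open>i < D\<close> by (simp add: sum.delta)
  qed
qed simp

definition Rset :: "'a::idom \<Rightarrow> 'a \<Rightarrow> nat \<Rightarrow> 'a set" where
  "Rset N t D = {x. \<exists>w\<in>Vset t D. N dvd (x - w)}"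

lemma Rset_add: assumes "x \<in> Rset N t D" "y \<in> Rset N t D" shows "x + y \<in> Rset N t D"
proof -
  obtain w w' where w: "w \<in> Vset t D" "N dvd x - w" "w' \<in> Vset t D" "N dvd y - w'"
    using assms unfolding Rset_def by blast
  have "N dvd (x - w) + (y - w')" using w by (intro dvd_add)
  hence "N dvd x + y - (w + w')" by (simp add: algebra_simps)
  thus ?thesis unfolding Rset_def using Vset_add[OF w(1) w(3)] by blast
qed

lemma Rset_smult: assumes "c \<in> Fp" "x \<in> Rset N t D" shows "c * x \<in> Rset N t D"
proof -
  obtain w where w: "w \<in> Vset t D" "N dvd x - w" using assms unfolding Rset_def by blast
  have "N dvd c * (x - w)" using w by (intro dvd_mult)
  hence "N dvd c * x - c * w" by (simp add: algebra_simps)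
  thus ?thesis unfolding Rset_def using Vset_smult[OF assms(1) w(1)] by blast
qed

lemma Rset_V: assumes "x \<in> Vset t D" shows "x \<in> Rset N t D"
proof -
  have "N dvd x - x" by simp
  thus ?thesis unfolding Rset_def using assms by blast
qed

lemma Rset_shift: assumes "x \<in> Rset N t D" "N dvd (y - x)" shows "y \<in> Rset N t D"
proof -
  obtain w where w: "w \<in> Vset t D" "N dvd x - w" using assms unfolding Rset_def by blast
  have "N dvd (y - x) + (x - w)" using w assms by (intro dvd_add)
  hence "N dvd y - w" by (simp add: algebra_simps)
  thus ?thesis unfolding Rset_def using w by blast
qed

lemma Rset_sum: "(\<And>i. i \<in> I \<Longrightarrow> f i \<in> Rset N t D) \<Longrightarrow> sum f I \<in> Rset N t D"
  by (induct I rule: infinite_finite_induct) (auto intro: Rset_add Rset_V Vset_0)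

lemma Rset_tmult:
  assumes tD: "t ^ D \<in> Rset N t D" and x: "x \<in> Rset N t D"
  shows "t * x \<in> Rset N t D"
proof -
  obtain w where w: "w \<in> Vset t D" "N dvd x - w" using x unfolding Rset_def by auto
  obtain e where e: "\<forall>i. e i \<in> Fp" "w = (\<Sum>i<D. e i * t ^ i)" using w unfolding Vset_def by auto
  have "t * w = (\<Sum>i<D. e i * t ^ Suc i)" unfolding e(2) sum_distrib_left
    by (rule sum.cong) (simp_all add: mult.left_commute)
  also have "\<dots> \<in> Rset N t D"
  proof (rule Rset_sum)
    fix i assume i: "i \<in> {..<D}"
    show "e i * t ^ Suc i \<in> Rset N t D"
    proof (cases "Suc i < D")
      case True
      have "t ^ Suc i \<in> Rset N t D" by (rule Rset_V[OF Vset_pow[OF True]])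
      thus ?thesis using Rset_smult e by blast
    next
      case False
      hence "Suc i = D" using i by simp
      thus ?thesis using tD Rset_smult[of "e i" "t ^ D" N t D] e by simp
    qed
  qed
  finally have tw: "t * w \<in> Rset N t D" .
  have "N dvd t * (x - w)" using w(2) by (intro dvd_mult)
  hence "N dvd t * x - t * w" by (simp add: algebra_simps)
  thus ?thesis using Rset_shift[OF tw] by simp
qed

lemma Rset_tpow:
  assumes tD: "t ^ D \<in> Rset N t D" and one: "1 \<in> Rset N t D"
  shows "t ^ m \<in> Rset N t D"
  by (induct m) (simp_all add: one Rset_tmult[OF tD])

definition SS :: "'a::idom \<Rightarrow> 'a set" where
  "SS t = {x. \<exists>n e. (\<forall>i. e i \<in> Fp) \<and> x = (\<Sum>i<n. e i * t ^ i)}"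

lemma SS_Rset:
  assumes tD: "t ^ D \<in> Rset N t D" and one: "1 \<in> Rset N t D" and x: "x \<in> SS t"
  shows "x \<in> Rset N t D"
proof -
  obtain n e where e: "\<forall>i. e i \<in> Fp" "x = (\<Sum>i<n. e i * t ^ i)" using x unfolding SS_def by auto
  show ?thesis unfolding e(2)
  proof (rule Rset_sum)
    fix i assume "i \<in> {..<n}"
    show "e i * t ^ i \<in> Rset N t D" using Rset_smult[OF _ Rset_tpow[OF tD one]] e by blast
  qed
qed

lemma SS_nonzero_data:
  assumes ch: "CHAR('a::idom) = p" "prime p"
  shows "(\<forall>i. e i \<in> Fp) \<Longrightarrow> (N::'a) = (\<Sum>i<n. e i * t ^ i) \<Longrightarrow> N \<noteq> 0 \<Longrightarrow>
     \<exists>D. t ^ D \<in> Rset N t D \<and> 1 \<in> Rset N t D"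
proof (induct n arbitrary: N)
  case 0 thus ?case by simp
next
  case (Suc n)
  show ?case
  proof (cases "e n = 0")
    case True
    hence "N = (\<Sum>i<n. e i * t ^ i)" using Suc by simp
    thus ?thesis using Suc by blast
  next
    case False
    obtain u where u: "u \<in> Fp" "u * e n = 1" using Fp_inverse[OF ch] Suc False by blast
    define w where "w = (\<Sum>i<n. (- u * e i) * t ^ i)"
    have wV: "w \<in> Vset t n" unfolding w_def Vset_def
      using Suc u by (auto intro!: exI[of _ "\<lambda>i. - u * e i"] Fp_mult Fp_uminus)
    have "t ^ n - w = u * N"
    proof -
      have "u * N = u * (\<Sum>i<n. e i * t ^ i) + u * e n * t ^ n" using Suc by (simp add: algebra_simps)
      also have "\<dots> = t ^ n - w" using u by (simp add: w_def sum_distrib_left sum_negf algebra_simps)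
      finally show ?thesis by simp
    qed
    hence "N dvd t ^ n - w" by simp
    hence tn: "t ^ n \<in> Rset N t n" unfolding Rset_def using wV by blast
    have one: "1 \<in> Rset N t n"
    proof (cases "n = 0")
      case True
      hence "1 - 0 = u * N" using \<open>t ^ n - w = u * N\<close> w_def by simp
      hence "N dvd 1 - 0" by (metis dvd_triv_right)
      thus ?thesis unfolding Rset_def using Vset_0 by blast
    next
      case False
      thus ?thesis using Vset_pow[of 0 n t] Rset_V by simp
    qed
    show ?thesis using tn one by blast
  qed
qed

definition hev :: "'a::idom \<Rightarrow> int poly \<Rightarrow> 'a" where
  "hev t q = poly (map_poly of_int q) t"

lemma hev_hom: "comm_ring_hom (hev t)"
proof (unfold_locales)
  show "hev t 0 = 0" by (simp add: hev_def)
  show "hev t 1 = 1" by (simp add: hev_def)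
  fix x y
  show "hev t (x + y) = hev t x + hev t y" by (simp add: hev_def of_int_poly_hom.hom_add)
  show "hev t (x * y) = hev t x * hev t y" by (simp add: hev_def of_int_poly_hom.hom_mult)
qed

lemma hev_SS: "hev t q \<in> SS t"
proof -
  have e: "hev t q = (\<Sum>i<Suc (degree (map_poly of_int q :: 'a poly)). of_int (coeff q i) * t ^ i)"
    unfolding hev_def poly_altdef by (simp add: lessThan_Suc_atMost coeff_map_poly)
  have f: "\<forall>i. (of_int (coeff q i) :: 'a) \<in> Fp" unfolding Fp_def by auto
  show ?thesis unfolding SS_def
    by (rule CollectI, rule exI[of _ "Suc (degree (map_poly of_int q :: 'a poly))"],
        rule exI[of _ "\<lambda>i. of_int (coeff q i)"]) (use e f in simp)
qed

lemma pps_hev: "x \<in> prime_poly_subring t \<Longrightarrow> \<exists>q. hev t q = x"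
proof -
  interpret h: comm_ring_hom "hev t" by (rule hev_hom)
  assume "x \<in> prime_poly_subring t"
  then obtain n c where x: "x = (\<Sum>i<n. of_nat (c i) * t ^ i)" unfolding prime_poly_subring_def by auto
  have "hev t (\<Sum>i<n. monom (int (c i)) i) = x"
    unfolding h.hom_sum x by (simp add: hev_def map_poly_monom poly_monom)
  thus ?thesis by blast
qed

lemma integral_relation:
  fixes a :: "'a::idom" and bs :: "'a list"
  assumes gen: "\<forall>x::'a. \<exists>q::nat \<Rightarrow> 'a. (\<forall>j<length bs. q j \<in> prime_poly_subring t) \<and> x = (\<Sum>j<length bs. q j * bs ! j)"
  shows "\<exists>P::'a poly. lead_coeff P = 1 \<and> (\<forall>i. coeff P i \<in> SS t) \<and> poly P a = 0"
proof -
  interpret h: comm_ring_hom "hev t" by (rule hev_hom)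
  define L where "L = length bs"
  have "\<forall>j. \<exists>q::nat \<Rightarrow> 'a. (\<forall>k<L. q k \<in> prime_poly_subring t) \<and> a * bs ! j = (\<Sum>k<L. q k * bs ! k)"
    using gen L_def by blast
  then obtain Q where Q: "\<And>j k. k < L \<Longrightarrow> Q j k \<in> prime_poly_subring t"
      "\<And>j. a * bs ! j = (\<Sum>k<L. Q j k * bs ! k)"
    by metis
  have "\<forall>j k. \<exists>q. k < L \<longrightarrow> hev t q = Q j k" using Q(1) pps_hev by blast
  then obtain qi where qi: "\<And>j k. k < L \<Longrightarrow> hev t (qi j k) = Q j k" by metis
  define Qi where "Qi = mat L L (\<lambda>(j,k). qi j k)"
  define QA where "QA = mat L L (\<lambda>(j,k). Q j k)"
  have QiC: "Qi \<in> carrier_mat L L" unfolding Qi_def by simp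
  have QA: "QA = map_mat (hev t) Qi" unfolding QA_def Qi_def by (rule eq_matI) (auto simp: qi)
  have QAC: "QA \<in> carrier_mat L L" unfolding QA_def by simp
  define P where "P = char_poly QA"
  have Pmap: "P = map_poly (hev t) (char_poly Qi)" unfolding P_def QA using h.char_poly_hom[OF QiC] .
  have lead: "lead_coeff P = 1" using degree_monic_char_poly[OF QAC] P_def by simp
  have coeffs: "\<forall>i. coeff P i \<in> SS t" unfolding Pmap by (simp add: coeff_map_poly hev_SS)
  define Bm where "Bm = mat L L (\<lambda>(j,k). (if j = k then a else 0) - Q j k)"
  have BmC: "Bm \<in> carrier_mat L L" unfolding Bm_def by simp
  have Pa: "poly P a = det Bm"
    unfolding P_def char_poly_def
    by (rule poly_det_cong[OF BmC]) (auto simp: char_poly_matrix_def Bm_def QA_def QAC)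
  have Bmb: "\<And>j. j < L \<Longrightarrow> (\<Sum>k<L. Bm $$ (j,k) * bs ! k) = 0"
  proof -
    fix j assume j: "j < L"
    have "(\<Sum>k<L. Bm $$ (j,k) * bs ! k) = (\<Sum>k<L. (if j = k then a * bs ! k else 0)) - (\<Sum>k<L. Q j k * bs ! k)"
      unfolding sum_subtractf[symmetric] by (rule sum.cong) (use j in \<open>auto simp: Bm_def left_diff_distrib\<close>)
    also have "\<dots> = 0" using j Q(2)[of j] by (simp add: sum.delta)
    finally show "(\<Sum>k<L. Bm $$ (j,k) * bs ! k) = 0" .
  qed
  define Ad where "Ad = adj_mat Bm"
  have AdC: "Ad \<in> carrier_mat L L" and AdB: "Ad * Bm = det Bm \<cdot>\<^sub>m 1\<^sub>m L"
    using adj_mat[OF BmC] Ad_def by auto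
  have detb: "\<And>k. k < L \<Longrightarrow> det Bm * bs ! k = 0"
  proof -
    fix k assume k: "k < L"
    have "(\<Sum>j<L. (Ad * Bm) $$ (k,j) * bs ! j) = (\<Sum>j<L. if j = k then det Bm * bs ! j else 0)"
      unfolding AdB by (rule sum.cong) (use k in auto)
    hence "det Bm * bs ! k = (\<Sum>j<L. (Ad * Bm) $$ (k,j) * bs ! j)"
      using k by (simp add: sum.delta)
    also have "\<dots> = (\<Sum>j<L. (\<Sum>i<L. Ad $$ (k,i) * Bm $$ (i,j)) * bs ! j)"
      using k AdC BmC by (intro sum.cong refl) (auto simp: scalar_prod_def atLeast0LessThan)
    also have "\<dots> = (\<Sum>i<L. Ad $$ (k,i) * (\<Sum>j<L. Bm $$ (i,j) * bs ! j))"
      by (simp add: sum_distrib_left sum_distrib_right mult.assoc) (rule sum.swap)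
    also have "\<dots> = 0" using Bmb by simp
    finally show "det Bm * bs ! k = 0" .
  qed
  obtain q1 where q1: "(1::'a) = (\<Sum>j<L. q1 j * bs ! j)" using gen L_def by blast
  have "det Bm = det Bm * (\<Sum>j<L. q1 j * bs ! j)" using q1 by simp
  also have "\<dots> = (\<Sum>j<L. q1 j * (det Bm * bs ! j))" by (simp add: sum_distrib_left algebra_simps)
  also have "\<dots> = (\<Sum>j<L. 0)" by (rule sum.cong) (simp_all add: detb)
  finally have "poly P a = 0" using Pa by simp
  thus ?thesis using lead coeffs by blast
qed

lemma min_relation:
  fixes a :: "'a::idom"
  assumes a: "a \<noteq> 0"
  shows "lead_coeff P = 1 \<Longrightarrow> (\<forall>i. coeff P i \<in> SS t) \<Longrightarrow> poly P a = 0 \<Longrightarrow> \<exists>N\<in>SS t. N \<noteq> 0 \<and> a dvd N"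
proof (induction "degree P" arbitrary: P rule: less_induct)
  case less
  obtain c P' where P: "P = pCons c P'" by (cases P) auto
  show ?case
  proof (cases "P' = 0")
    case True
    hence "P = [:c:]" using P by simp
    hence "P = 1" using less.prems by simp
    thus ?thesis using less.prems by simp
  next
    case False
    have dP: "degree P = Suc (degree P')" using P False by simp
    have lP': "lead_coeff P' = 1" using less.prems P False by simp
    have cP': "\<forall>i. coeff P' i \<in> SS t" using less.prems P by (metis coeff_pCons_Suc)
    have cS: "c \<in> SS t" using less.prems P by (metis coeff_pCons_0)
    have rel: "c + a * poly P' a = 0" using less.prems P by simp
    show ?thesis
    proof (cases "c = 0")
      case True
      hence "poly P' a = 0" using rel a by simp
      thus ?thesis using less.hyps[of P'] dP lP' cP' by simp
    next
      case False
      have "c = a * (- poly P' a)" using rel by (simp add: eq_neg_iff_add_eq_0)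
      hence "a dvd c" by simp
      thus ?thesis using False cS by blast
    qed
  qed
qed

lemma pps_SS: "x \<in> prime_poly_subring t \<Longrightarrow> x \<in> SS t"
  using pps_hev hev_SS by metis

lemma finite_residues:
  fixes a :: "'a::idom"
  assumes adm: "admissible_coeff_ring TYPE('a)" and a: "a \<noteq> 0"
  shows "\<exists>F. finite F \<and> (\<forall>x. \<exists>y\<in>F. a dvd (x - y))"
proof -
  define p where "p = CHAR('a)"
  have pp: "prime p" using adm unfolding admissible_coeff_ring_def p_def by simp
  obtain t :: 'a and bs :: "'a list" where gen:
    "\<forall>x::'a. \<exists>q::nat \<Rightarrow> 'a. (\<forall>j<length bs. q j \<in> prime_poly_subring t) \<and> x = (\<Sum>j<length bs. q j * bs ! j)"
    using adm unfolding admissible_coeff_ring_def by blast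
  obtain P :: "'a poly" where "lead_coeff P = 1" "\<forall>i. coeff P i \<in> SS t" "poly P a = 0"
    using integral_relation[OF gen] by blast
  then obtain N where N: "N \<in> SS t" "N \<noteq> 0" "a dvd N" using min_relation[OF a] by blast
  obtain n e where e: "\<forall>i. e i \<in> Fp" "N = (\<Sum>i<n. e i * t ^ i)" using N(1) unfolding SS_def by auto
  obtain D where D: "t ^ D \<in> Rset N t D" "1 \<in> Rset N t D"
    using SS_nonzero_data[OF p_def[symmetric] pp e N(2)] by blast
  define L where "L = length bs"
  define F where "F = (\<lambda>g. \<Sum>j<L. g j * bs ! j) ` PiE {..<L} (\<lambda>_. Vset t D)"
  have fin: "finite F" unfolding F_def
    using Vset_finite[OF p_def[symmetric] pp] by (intro finite_imageI finite_PiE) auto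
  have "\<forall>x. \<exists>y\<in>F. a dvd (x - y)"
  proof
    fix x
    obtain q where q: "\<forall>j<L. q j \<in> prime_poly_subring t" "x = (\<Sum>j<L. q j * bs ! j)"
      using gen L_def by blast
    have "\<forall>j. \<exists>w. j < L \<longrightarrow> w \<in> Vset t D \<and> N dvd (q j - w)"
      using SS_Rset[OF D pps_SS] q(1) unfolding Rset_def by blast
    then obtain w where w: "\<And>j. j < L \<Longrightarrow> w j \<in> Vset t D \<and> N dvd (q j - w j)" by metis
    define y where "y = (\<Sum>j<L. restrict w {..<L} j * bs ! j)"
    have yF: "y \<in> F" unfolding F_def y_def using w by (intro imageI) (auto simp: PiE_iff extensional_def)
    have "y = (\<Sum>j<L. w j * bs ! j)" unfolding y_def by simp
    hence "x - y = (\<Sum>j<L. (q j - w j) * bs ! j)" using q(2) by (simp add: sum_subtractf left_diff_distrib)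
    also have "N dvd \<dots>" using w by (intro dvd_sum) simp
    finally have "a dvd x - y" using N(3) dvd_trans by blast
    thus "\<exists>y\<in>F. a dvd (x - y)" using yF by blast
  qed
  thus ?thesis using fin by blast
qed

lemma periodic_power:
  fixes a :: "'a::idom"
  assumes F: "finite F" "\<forall>x. \<exists>y\<in>F. a dvd (x - y)"
  shows "\<exists>n0 T. T \<ge> 1 \<and> a dvd c ^ n0 * (1 - c ^ T)"
proof -
  define f where "f = (\<lambda>n. SOME y. y \<in> F \<and> a dvd (c ^ n - y))"
  have f: "\<And>n. f n \<in> F \<and> a dvd (c ^ n - f n)"
    unfolding f_def using F(2) by (metis (no_types, lifting) someI_ex)
  have "f ` {..card F} \<subseteq> F" using f by auto
  hence "card (f ` {..card F}) \<le> card F" using F(1) card_mono by blast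
  hence "card (f ` {..card F}) < card {..card F}" by simp
  hence "\<not> inj_on f {..card F}" by (rule pigeonhole)
  then obtain n1 n2 where n: "n1 \<noteq> n2" "f n1 = f n2" unfolding inj_on_def by blast
  have dv: "\<And>m1 m2. f m1 = f m2 \<Longrightarrow> a dvd c ^ m1 - c ^ m2"
  proof -
    fix m1 m2 assume "f m1 = f m2"
    hence "c ^ m1 - c ^ m2 = (c ^ m1 - f m1) - (c ^ m2 - f m2)" by simp
    thus "a dvd c ^ m1 - c ^ m2" using f by (metis dvd_diff)
  qed
  show ?thesis
  proof (cases "n1 < n2")
    case True
    have "c ^ n1 * (1 - c ^ (n2 - n1)) = c ^ n1 - c ^ n2"
      using True by (simp add: right_diff_distrib flip: power_add)
    thus ?thesis using dv[OF n(2)] True by (intro exI[of _ n1] exI[of _ "n2 - n1"]) auto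
  next
    case False
    hence lt: "n2 < n1" using n by simp
    have "c ^ n2 * (1 - c ^ (n1 - n2)) = c ^ n2 - c ^ n1"
      using lt by (simp add: right_diff_distrib flip: power_add)
    thus ?thesis using dv[OF n(2)[symmetric]] lt by (intro exI[of _ n2] exI[of _ "n1 - n2"]) auto
  qed
qed

inductive_set lp :: "'a::comm_ring_1 set \<Rightarrow> nat \<Rightarrow> 'a set" for P k where
  lp_gen: "set xs \<subseteq> P \<Longrightarrow> length xs = k \<Longrightarrow> u * prod_list xs \<in> lp P k"
| lp_zero: "0 \<in> lp P k"
| lp_add: "x \<in> lp P k \<Longrightarrow> y \<in> lp P k \<Longrightarrow> x + y \<in> lp P k"

lemma lp_mult: "z \<in> lp P k \<Longrightarrow> x \<in> P \<Longrightarrow> x * z \<in> lp P (Suc k)"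
proof (induction z rule: lp.induct)
  case (lp_gen xs u)
  have "x * (u * prod_list xs) = u * prod_list (x # xs)" by (simp add: algebra_simps)
  moreover have "set (x # xs) \<subseteq> P" "length (x # xs) = Suc k" using lp_gen by auto
  ultimately show ?case by (metis lp.lp_gen)
next
  case lp_zero thus ?case using lp.lp_zero by simp
next
  case (lp_add a b) thus ?case by (simp add: distrib_left lp.lp_add)
qed

lemma lp_sum: "(\<And>n. n < (m::nat) \<Longrightarrow> f n \<in> lp P k) \<Longrightarrow> (\<Sum>n<m. f n) \<in> lp P k"
proof (induction m)
  case 0 thus ?case by (simp add: lp.lp_zero)
next
  case (Suc m) thus ?case by (simp add: lp.lp_add)
qed

lemma ideal_pow_lp: "w \<in> ideal_pow P k \<Longrightarrow> w \<in> lp P k"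
proof (induction k arbitrary: w)
  case 0
  have "w * prod_list [] \<in> lp P 0" by (rule lp_gen) auto
  thus ?case by simp
next
  case (Suc k)
  have "\<exists>(m::nat) x z. w = (\<Sum>n<m. x n * z n) \<and> (\<forall>n<m. x n \<in> P \<and> z n \<in> ideal_pow P k)"
    using Suc.prems by simp
  then obtain m :: nat and x z where w: "w = (\<Sum>n<m. x n * z n)" "\<forall>n<m. x n \<in> P \<and> z n \<in> ideal_pow P k"
    by blast
  show ?case unfolding w(1) using w(2) Suc.IH by (intro lp_sum lp_mult) auto
qed

lemma cong_mult:
  fixes a :: "'a::comm_ring_1"
  assumes "a dvd u - u'" "a dvd v - v'"
  shows "a dvd u * v - u' * v'"
proof -
  have "u * v - u' * v' = u * (v - v') + (u - u') * v'" by (simp add: algebra_simps)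
  thus ?thesis using assms by (metis dvd_add dvd_mult dvd_mult2)
qed

lemma primary_power:
  fixes a :: "'a::idom" and P :: "'a set"
  assumes adm: "admissible_coeff_ring TYPE('a)" and a: "a \<noteq> 0"
    and P0: "0 \<in> P" and Padd: "\<And>x y. x \<in> P \<Longrightarrow> y \<in> P \<Longrightarrow> x + y \<in> P"
    and Pmult: "\<And>x y. x \<in> P \<Longrightarrow> x * y \<in> P"
    and Pprime: "\<And>x y. x * y \<in> P \<Longrightarrow> x \<in> P \<or> y \<in> P"
    and P1: "1 \<notin> P"
  shows "\<exists>k \<beta>. \<beta> \<notin> P \<and> (\<forall>w\<in>ideal_pow P k. a dvd \<beta> * w)"
proof -
  obtain F where F: "finite F" "\<forall>x. \<exists>y\<in>F. a dvd (x - y)" using finite_residues[OF adm a] by blast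
  define cls where "cls = (\<lambda>x. SOME y. y \<in> F \<and> a dvd (x - y))"
  have cls: "\<And>x. cls x \<in> F \<and> a dvd (x - cls x)"
    unfolding cls_def using F(2) by (metis (no_types, lifting) someI_ex)
  define C where "C = cls ` P"
  have Cfin: "finite C" unfolding C_def using F(1) cls finite_subset by (metis image_subsetI)
  have Cne: "C \<noteq> {}" unfolding C_def using P0 by blast
  define rep where "rep = (\<lambda>y. SOME c. c \<in> P \<and> cls c = y)"
  have rep: "\<And>y. y \<in> C \<Longrightarrow> rep y \<in> P \<and> cls (rep y) = y"
    unfolding rep_def C_def by (metis (mono_tags, lifting) imageE someI_ex)
  have repcong: "\<And>x. x \<in> P \<Longrightarrow> a dvd x - rep (cls x)"
  proof -
    fix x assume x: "x \<in> P"
    hence cx: "cls x \<in> C" unfolding C_def by simp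
    have "x - rep (cls x) = (x - cls x) - (rep (cls x) - cls (rep (cls x)))" using rep[OF cx] by simp
    thus "a dvd x - rep (cls x)" using cls by (metis dvd_diff)
  qed
  have "\<forall>y. \<exists>nT. snd nT \<ge> 1 \<and> a dvd rep y ^ fst nT * (1 - rep y ^ snd nT)"
    using periodic_power[OF F] by auto
  then obtain nT where nT: "\<And>y. snd (nT y) \<ge> 1 \<and> a dvd rep y ^ fst (nT y) * (1 - rep y ^ snd (nT y))"
    by metis
  define n where "n = (\<lambda>y. fst (nT y))"
  define gam where "gam = (\<lambda>y. 1 - rep y ^ snd (nT y))"
  have gdvd: "\<And>y. a dvd rep y ^ n y * gam y" using nT unfolding n_def gam_def by simp
  have gnP: "\<And>y. y \<in> C \<Longrightarrow> gam y \<notin> P"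
  proof
    fix y assume y: "y \<in> C" and g: "gam y \<in> P"
    obtain T where T: "snd (nT y) = Suc T" using nT[of y] by (cases "snd (nT y)") auto
    have "rep y ^ snd (nT y) = rep y * rep y ^ T" using T by simp
    hence "rep y ^ snd (nT y) \<in> P" using Pmult rep[OF y] by simp
    hence "gam y + rep y ^ snd (nT y) \<in> P" using Padd g by simp
    thus False using P1 gam_def by simp
  qed
  define beta where "beta = (\<Prod>y\<in>C. gam y)"
  have bnP: "beta \<notin> P" unfolding beta_def using Cfin gnP
  proof (induction C rule: finite_induct)
    case empty thus ?case using P1 by simp
  next
    case (insert y C) thus ?case using Pprime by auto
  qed
  define k where "k = (\<Sum>y\<in>C. n y)"
  define cnt where "cnt = (\<lambda>y xs. length (filter (\<lambda>x. cls x = y) xs))"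
  have cntsum: "\<And>xs. set xs \<subseteq> P \<Longrightarrow> (\<Sum>y\<in>C. cnt y xs) = length xs"
  proof -
    fix xs show "set xs \<subseteq> P \<Longrightarrow> (\<Sum>y\<in>C. cnt y xs) = length xs"
    proof (induction xs)
      case (Cons x xs)
      have cx: "cls x \<in> C" using Cons.prems unfolding C_def by simp
      have "(\<Sum>y\<in>C. cnt y (x # xs)) = (\<Sum>y\<in>C. (if cls x = y then 1 else 0) + cnt y xs)"
        unfolding cnt_def by (rule sum.cong) auto
      also have "\<dots> = 1 + length xs" using Cons cx Cfin by (simp add: sum.distrib sum.delta)
      finally show ?case by simp
    qed (simp add: cnt_def)
  qed
  have prodcong: "\<And>xs. set xs \<subseteq> P \<Longrightarrow> a dvd prod_list xs - (\<Prod>y\<in>C. rep y ^ cnt y xs)"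
  proof -
    fix xs show "set xs \<subseteq> P \<Longrightarrow> a dvd prod_list xs - (\<Prod>y\<in>C. rep y ^ cnt y xs)"
    proof (induction xs)
      case (Cons x xs)
      have cx: "cls x \<in> C" using Cons.prems unfolding C_def by simp
      have "(\<Prod>y\<in>C. rep y ^ cnt y (x # xs)) = (\<Prod>y\<in>C. (if cls x = y then rep y else 1) * rep y ^ cnt y xs)"
        unfolding cnt_def by (rule prod.cong) auto
      also have "\<dots> = rep (cls x) * (\<Prod>y\<in>C. rep y ^ cnt y xs)"
        using cx Cfin by (simp add: prod.distrib prod.delta)
      finally have e: "(\<Prod>y\<in>C. rep y ^ cnt y (x # xs)) = rep (cls x) * (\<Prod>y\<in>C. rep y ^ cnt y xs)" .
      show ?case unfolding e using cong_mult[OF repcong Cons.IH] Cons.prems by simp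
    qed (simp add: cnt_def)
  qed
  have main: "\<And>xs. set xs \<subseteq> P \<Longrightarrow> length xs = k \<Longrightarrow> a dvd beta * prod_list xs"
  proof -
    fix xs assume xs: "set xs \<subseteq> P" "length xs = k"
    have "\<exists>y0\<in>C. n y0 \<le> cnt y0 xs"
    proof (rule ccontr)
      assume "\<not> (\<exists>y0\<in>C. n y0 \<le> cnt y0 xs)"
      hence "\<forall>y\<in>C. cnt y xs < n y" by auto
      hence "(\<Sum>y\<in>C. cnt y xs) < (\<Sum>y\<in>C. n y)" using Cfin Cne by (intro sum_strict_mono) auto
      thus False using cntsum[OF xs(1)] xs(2) k_def by simp
    qed
    then obtain y0 where y0: "y0 \<in> C" "n y0 \<le> cnt y0 xs" by blast
    have "beta * (\<Prod>y\<in>C. rep y ^ cnt y xs)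
        = (rep y0 ^ n y0 * gam y0) * (rep y0 ^ (cnt y0 xs - n y0) * ((\<Prod>y\<in>C - {y0}. gam y) * (\<Prod>y\<in>C - {y0}. rep y ^ cnt y xs)))"
    proof -
      have "beta = gam y0 * (\<Prod>y\<in>C - {y0}. gam y)" unfolding beta_def using y0 Cfin by (simp add: prod.remove)
      moreover have "(\<Prod>y\<in>C. rep y ^ cnt y xs) = rep y0 ^ cnt y0 xs * (\<Prod>y\<in>C - {y0}. rep y ^ cnt y xs)"
        using y0 Cfin by (simp add: prod.remove)
      moreover have "rep y0 ^ cnt y0 xs = rep y0 ^ n y0 * rep y0 ^ (cnt y0 xs - n y0)"
        using y0 by (simp flip: power_add)
      ultimately show ?thesis by (simp add: ac_simps)
    qed
    hence d1: "a dvd beta * (\<Prod>y\<in>C. rep y ^ cnt y xs)" using gdvd[of y0] by simp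
    have "a dvd beta * (prod_list xs - (\<Prod>y\<in>C. rep y ^ cnt y xs))" using prodcong[OF xs(1)] by simp
    hence "a dvd beta * prod_list xs - beta * (\<Prod>y\<in>C. rep y ^ cnt y xs)" by (simp add: right_diff_distrib)
    thus "a dvd beta * prod_list xs" using d1 by (metis diff_add_cancel dvd_add)
  qed
  have "\<And>w. w \<in> lp P k \<Longrightarrow> a dvd beta * w"
  proof -
    fix w assume "w \<in> lp P k"
    thus "a dvd beta * w"
    proof (induction w rule: lp.induct)
      case (lp_gen xs u)
      have eq: "beta * (u * prod_list xs) = u * (beta * prod_list xs)" by (simp add: ac_simps)
      have "a dvd u * (beta * prod_list xs)" using main[OF lp_gen] by (rule dvd_mult)
      thus ?case unfolding eq .
    next
      case lp_zero thus ?case by simp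
    next
      case (lp_add x y) thus ?case by (simp add: distrib_left)
    qed
  qed
  thus ?thesis using bnP ideal_pow_lp by blast
qed

locale dmctx = redctx v red
  for v :: "'l::field \<Rightarrow> 'g::linordered_ab_group_add" and red :: "'l \<Rightarrow> 'k::field" +
  fixes p :: nat and phi :: "'a::idom \<Rightarrow> 'l poly" and y :: 'l
  assumes adm: "admissible_coeff_ring TYPE('a)" and chA: "CHAR('a) = p" and chL: "CHAR('l) = p"
    and dm: "drinfeld_module p phi" and gr: "good_reduction_via p phi v y"
begin

lemma pp: "prime p" using adm chA unfolding admissible_coeff_ring_def by simp
lemma p2: "p \<ge> 2" using pp prime_ge_2_nat by blast
lemma p0: "p > 0" using p2 by simp
lemma chK: "CHAR('k) = p" using CHAR_red[OF chL pp] .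
lemma y0: "y \<noteq> 0" using gr unfolding good_reduction_via_def by simp

lemma phi1: "phi 1 = 1" using dm unfolding drinfeld_module_def by simp
lemma phi_add: "phi (a + b) = phi a + phi b" using dm unfolding drinfeld_module_def by simp
lemma phi_mult: "phi (a * b) = tmult p (phi a) (phi b)" using dm unfolding drinfeld_module_def by simp
lemma phi0: "phi 0 = 0"
proof -
  have "phi 0 + 0 = phi 0 + phi 0" using phi_add[of 0 0] by simp
  thus ?thesis by (metis add_left_cancel)
qed
lemma phi_comm: "tmult p (phi a) (phi b) = tmult p (phi b) (phi a)"
  using phi_mult[of a b] phi_mult[of b a] by (simp add: mult.commute)

definition psi where "psi a = conj_tp p y (phi a)"
definition phv where "phv a = mred (psi a)"

lemma phv_eq: "reduction p red y phi = phv"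
  by (rule ext) (simp add: reduction_def reduce_def phv_def psi_def)

lemma reduce_eq: "reduce p red y f = mred (conj_tp p y f)"
  by (simp add: reduce_def)

lemma psi_ivr: "ivr (psi a)" using gr unfolding good_reduction_via_def psi_def by simp
lemma psi_lc: "a \<noteq> 0 \<Longrightarrow> lead_coeff (psi a) \<noteq> 0 \<and> v (lead_coeff (psi a)) = 0"
  using gr unfolding good_reduction_via_def psi_def by simp

lemma conj_mult': "conj_tp p y (tmult p f g) = tmult p (conj_tp p y f) (conj_tp p y g)"
  using conj_mult[OF chL pp y0] .

lemma psi_mult: "psi (a * b) = tmult p (psi a) (psi b)"
  unfolding psi_def phi_mult conj_mult' ..
lemma psi_add: "psi (a + b) = psi a + psi b"
  unfolding psi_def phi_add conj_add[OF p0] ..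
lemma psi_comm: "tmult p (psi a) (psi b) = tmult p (psi b) (psi a)"
  using psi_mult[of a b] psi_mult[of b a] by (simp add: mult.commute)
lemma psi1: "psi 1 = 1" unfolding psi_def phi1 using conj_one[OF p0 y0] .

lemma phv_mult: "phv (a * b) = tmult p (phv a) (phv b)"
  unfolding phv_def psi_mult using mred_tmult[OF p0 psi_ivr psi_ivr] .
lemma phv_add: "phv (a + b) = phv a + phv b"
  unfolding phv_def psi_add using mred_add[OF psi_ivr psi_ivr] .
lemma phv_comm: "tmult p (phv a) (phv b) = tmult p (phv b) (phv a)"
  using phv_mult[of a b] phv_mult[of b a] by (simp add: mult.commute)
lemma phv1: "phv 1 = 1" unfolding phv_def psi1 by simp

lemma End_iff: "f \<in> End p phi \<longleftrightarrow> (\<forall>a. tmult p (conj_tp p y f) (psi a) = tmult p (psi a) (conj_tp p y f))"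
proof
  assume f: "f \<in> End p phi"
  show "\<forall>a. tmult p (conj_tp p y f) (psi a) = tmult p (psi a) (conj_tp p y f)"
  proof
    fix a
    have "tmult p f (phi a) = tmult p (phi a) f" using f unfolding End_def by blast
    hence "conj_tp p y (tmult p f (phi a)) = conj_tp p y (tmult p (phi a) f)" by simp
    thus "tmult p (conj_tp p y f) (psi a) = tmult p (psi a) (conj_tp p y f)"
      unfolding conj_mult' psi_def .
  qed
next
  assume h: "\<forall>a. tmult p (conj_tp p y f) (psi a) = tmult p (psi a) (conj_tp p y f)"
  show "f \<in> End p phi" unfolding End_def
  proof (clarify)
    fix a
    have "conj_tp p y (tmult p f (phi a)) = conj_tp p y (tmult p (phi a) f)"
      using h unfolding psi_def conj_mult' by simp
    thus "tmult p f (phi a) = tmult p (phi a) f" using conj_inj[OF p0 y0] by blast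
  qed
qed

lemma exists_a0: "\<exists>a0. a0 \<noteq> 0 \<and> degree (psi a0) \<ge> 1"
proof -
  obtain a0 where "degree (phi a0) > 0" using dm unfolding drinfeld_module_def by blast
  moreover hence "a0 \<noteq> 0" using phi0 by auto
  ultimately show ?thesis unfolding psi_def using conj_degree[OF p0 y0] by (intro exI[of _ a0]) auto
qed

lemma part1a: "f \<in> End p phi \<Longrightarrow> ivr (conj_tp p y f)"
proof -
  assume f: "f \<in> End p phi"
  obtain a0 where a0: "a0 \<noteq> 0" "degree (psi a0) \<ge> 1" using exists_a0 by blast
  show "ivr (conj_tp p y f)"
    by (rule integral_commuting[OF p2 psi_ivr a0(2) conjunct2[OF psi_lc[OF a0(1)]]])
       (use f End_iff in blast)
qed

lemma part1b: "f \<in> End p phi \<Longrightarrow> reduce p red y f \<in> End p phv"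
proof -
  assume f: "f \<in> End p phi"
  have iv: "ivr (conj_tp p y f)" using part1a[OF f] .
  show ?thesis unfolding End_def reduce_eq
  proof clarify
    fix a
    have "tmult p (mred (conj_tp p y f)) (phv a) = mred (tmult p (conj_tp p y f) (psi a))"
      unfolding phv_def using mred_tmult[OF p0 iv psi_ivr] by simp
    also have "\<dots> = mred (tmult p (psi a) (conj_tp p y f))" using f End_iff by simp
    also have "\<dots> = tmult p (phv a) (mred (conj_tp p y f))"
      unfolding phv_def using mred_tmult[OF p0 psi_ivr iv] by simp
    finally show "tmult p (mred (conj_tp p y f)) (phv a) = tmult p (phv a) (mred (conj_tp p y f))" .
  qed
qed

lemma part2: "inj_on (reduce p red y) (End p phi)"
proof (rule inj_onI)
  fix f1 f2 assume f1: "f1 \<in> End p phi" and f2: "f2 \<in> End p phi"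
    and e: "reduce p red y f1 = reduce p red y f2"
  define h where "h = conj_tp p y f1 - conj_tp p y f2"
  have iv1: "ivr (conj_tp p y f1)" and iv2: "ivr (conj_tp p y f2)" using part1a f1 f2 by auto
  have ivh: "ivr h" unfolding h_def using ivr_diff[OF iv1 iv2] .
  have "mred h = 0" unfolding h_def using e mred_diff[OF iv1 iv2] by (simp add: reduce_eq)
  hence ih: "ivi h" using ivi_iff[OF ivh] by simp
  obtain a0 where a0: "a0 \<noteq> 0" "degree (psi a0) \<ge> 1" using exists_a0 by blast
  have comm: "tmult p h (psi a0) = tmult p (psi a0) h"
    unfolding h_def tmult_diff_left[OF p0] tmult_diff_right[OF chL pp]
    using f1 f2 End_iff by simp
  have "h = 0"
    by (rule ideal_commuting_zero[OF p2 psi_ivr a0(2) conjunct2[OF psi_lc[OF a0(1)]] comm ih])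
  hence "conj_tp p y f1 = conj_tp p y f2" unfolding h_def by simp
  thus "f1 = f2" using conj_inj[OF p0 y0] by blast
qed

lemma tcoeff0: "coeff (tmult p f g) 0 = coeff f 0 * coeff g 0"
  by (simp add: tcoeff[OF p0])

lemma phv0: "phv 0 = 0"
proof -
  have "phv 0 + 0 = phv 0 + phv 0" using phv_add[of 0 0] by simp
  thus ?thesis by (metis add_left_cancel)
qed

lemma gam_mult: "coeff (phv (a * b)) 0 = coeff (phv a) 0 * coeff (phv b) 0"
  unfolding phv_mult tcoeff0 ..
lemma gam_add: "coeff (phv (a + b)) 0 = coeff (phv a) 0 + coeff (phv b) 0"
  unfolding phv_add by simp

lemma End_tmult_phi:
  assumes f: "f \<in> End p phi" shows "tmult p (phi c) f \<in> End p phi"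
  unfolding End_def
proof clarify
  fix a
  have A: "\<And>f g h :: 'l poly. tmult p (tmult p f g) h = tmult p f (tmult p g h)" using tmult_assoc[OF chL pp] .
  have fa: "tmult p f (phi a) = tmult p (phi a) f" using f unfolding End_def by blast
  have "tmult p (tmult p (phi c) f) (phi a) = tmult p (phi c) (tmult p (phi a) f)" unfolding A fa ..
  also have "\<dots> = tmult p (tmult p (phi a) (phi c)) f" unfolding A[symmetric] phi_comm[of c a] ..
  also have "\<dots> = tmult p (phi a) (tmult p (phi c) f)" unfolding A ..
  finally show "tmult p (tmult p (phi c) f) (phi a) = tmult p (phi a) (tmult p (phi c) f)" .
qed

lemma reduce_tmult_phi:
  assumes f: "f \<in> End p phi" shows "reduce p red y (tmult p (phi c) f) = tmult p (phv c) (reduce p red y f)"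
  unfolding reduce_eq conj_mult' phv_def psi_def[symmetric]
  using mred_tmult[OF p0 psi_ivr part1a[OF f]] .

lemma End_phv_tmult:
  assumes x: "x \<in> End p phv" shows "tmult p (phv w) x \<in> End p phv"
  unfolding End_def
proof clarify
  fix a
  have A: "\<And>f g h :: 'k poly. tmult p (tmult p f g) h = tmult p f (tmult p g h)" using tmult_assoc[OF chK pp] .
  have xa: "tmult p x (phv a) = tmult p (phv a) x" using x unfolding End_def by blast
  have "tmult p (tmult p (phv w) x) (phv a) = tmult p (phv w) (tmult p (phv a) x)" unfolding A xa ..
  also have "\<dots> = tmult p (tmult p (phv a) (phv w)) x" unfolding A[symmetric] phv_comm[of w a] ..
  also have "\<dots> = tmult p (phv a) (tmult p (phv w) x)" unfolding A ..
  finally show "tmult p (tmult p (phv w) x) (phv a) = tmult p (phv a) (tmult p (phv w) x)" .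
qed

lemma sat:
  assumes bP: "coeff (phv b) 0 \<noteq> 0" and x': "x' \<in> End p phv" and f: "f \<in> End p phi"
    and fe: "reduce p red y f = tmult p (phv b) x'"
  shows "x' \<in> reduce p red y ` End p phi"
proof -
  have AL: "\<And>f g h :: 'l poly. tmult p (tmult p f g) h = tmult p f (tmult p g h)" using tmult_assoc[OF chL pp] .
  have b0: "b \<noteq> 0" using bP phv0 by auto
  define B where "B = psi b"
  define g where "g = conj_tp p y f"
  have ivB: "ivr B" unfolding B_def by (rule psi_ivr)
  have lcB: "lead_coeff B \<noteq> 0" "v (lead_coeff B) = 0" using psi_lc[OF b0] B_def by auto
  have Bnz: "B \<noteq> 0" using lcB by auto
  have "red (coeff B 0) \<noteq> 0" using bP by (simp add: phv_def B_def mred_coeff)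
  hence "coeff B 0 \<notin> val_ideal v" using red_zero_iff[OF ivr_coeff[OF ivB]] by simp
  hence c0: "coeff B 0 \<noteq> 0" "v (coeff B 0) = 0" using unit_props[OF ivr_coeff[OF ivB]] by auto
  have ivg: "ivr g" unfolding g_def using part1a[OF f] .
  have gcomm: "\<And>c. tmult p g (psi c) = tmult p (psi c) g" using f End_iff g_def by simp
  obtain q r where qr: "ivr q" "ivr r" "g = tmult p q B + r" "r = 0 \<or> degree r < degree B"
    using division[OF p0 ivB Bnz lcB(2) ivg] by blast
  have mB: "mred B = phv b" unfolding B_def phv_def ..
  have mg: "mred g = tmult p (mred q) (phv b) + mred r"
    unfolding qr(3) using mred_add[OF ivr_tmult[OF p0 qr(1) ivB] qr(2)] mred_tmult[OF p0 qr(1) ivB] mB by simp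
  have mg2: "mred g = tmult p x' (phv b)"
    using fe x' unfolding reduce_eq g_def End_def by simp
  have dphv: "degree (phv b) = degree B" "phv b \<noteq> 0"
    using mred_degree[OF ivB Bnz lcB(2)] mB by auto
  have mq: "mred q = x'"
  proof (rule ccontr)
    assume ne: "mred q \<noteq> x'"
    have "tmult p (mred q - x') (phv b) = - mred r"
      using mg mg2 by (simp add: tmult_diff_left[OF p0] algebra_simps)
    moreover have "tmult p (mred q - x') (phv b) \<noteq> 0"
      "degree (tmult p (mred q - x') (phv b)) = degree (mred q - x') + degree B"
      using tmult_nz[OF p0 _ dphv(2), of "mred q - x'"] ne dphv by auto
    moreover have "r \<noteq> 0 \<Longrightarrow> degree (- mred r) < degree B"
      using qr(4) mred_degree_le[of r] by simp
    ultimately show False using qr(4) by (cases "r = 0") auto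
  qed
  have "mred r = 0" using mg mg2 mq by simp
  hence ivir: "ivi r" using ivi_iff[OF qr(2)] by simp
  define s where "s = tmult p q B - tmult p B q + r"
  have rel: "tmult p B r = tmult p s B"
  proof -
    have gB: "tmult p g B = tmult p B g" using gcomm[of b] B_def by simp
    have e1: "tmult p g B = tmult p (tmult p q B) B + tmult p r B"
      unfolding qr(3) tmult_add_left[OF p0] ..
    have e2: "tmult p B g = tmult p (tmult p B q) B + tmult p B r"
      unfolding qr(3) tmult_add_right[OF chL pp] AL ..
    have e3: "tmult p s B = tmult p (tmult p q B) B - tmult p (tmult p B q) B + tmult p r B"
      unfolding s_def tmult_add_left[OF p0] tmult_diff_left[OF p0] ..
    show ?thesis using gB e1 e2 e3 by (simp add: algebra_simps)
  qed
  have r0: "r = 0"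
    by (rule separable_remainder_zero[OF p2 ivB Bnz lcB(2) c0 ivir qr(4) rel])
  have gq: "g = tmult p q B" using qr(3) r0 by simp
  have qcomm: "\<And>c. tmult p q (psi c) = tmult p (psi c) q"
  proof -
    fix c
    have "tmult p (tmult p q (psi c)) B = tmult p q (tmult p (psi c) B)" unfolding AL ..
    also have "\<dots> = tmult p q (tmult p B (psi c))" using psi_comm[of c b] B_def by simp
    also have "\<dots> = tmult p g (psi c)" unfolding gq AL ..
    also have "\<dots> = tmult p (psi c) g" by (rule gcomm)
    also have "\<dots> = tmult p (tmult p (psi c) q) B" unfolding gq AL ..
    finally show "tmult p q (psi c) = tmult p (psi c) q" using tmult_cancel_right[OF p0 Bnz] by blast
  qed
  define f' where "f' = conj_tp p (inverse y) q"
  have cf': "conj_tp p y f' = q" unfolding f'_def using conj_inv2[OF p0 y0] .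
  have "f' \<in> End p phi" unfolding End_iff cf' using qcomm by blast
  moreover have "reduce p red y f' = x'" unfolding reduce_eq cf' mq ..
  ultimately show ?thesis by blast
qed

lemma part3:
  assumes x: "x \<in> End p phv" and a: "a \<noteq> 0" and ax: "tmult p (phv a) x \<in> reduce p red y ` End p phi"
  shows "\<exists>k. \<forall>b\<in>ideal_pow (char_ideal phv) k. tmult p (phv b) x \<in> reduce p red y ` End p phi"
proof -
  have AK: "\<And>f g h :: 'k poly. tmult p (tmult p f g) h = tmult p f (tmult p g h)" using tmult_assoc[OF chK pp] .
  define P where "P = char_ideal phv"
  have Pm: "\<And>z. z \<in> P \<longleftrightarrow> coeff (phv z) 0 = 0" unfolding P_def char_ideal_def by simp
  have P0: "0 \<in> P" unfolding Pm phv0 by simp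
  have Padd: "\<And>x y. x \<in> P \<Longrightarrow> y \<in> P \<Longrightarrow> x + y \<in> P" unfolding Pm gam_add by simp
  have Pmult: "\<And>x y. x \<in> P \<Longrightarrow> x * y \<in> P" unfolding Pm gam_mult by simp
  have Pprime: "\<And>x y. x * y \<in> P \<Longrightarrow> x \<in> P \<or> y \<in> P" unfolding Pm gam_mult by simp
  have P1: "1 \<notin> P" unfolding Pm phv1 by simp
  have ex: "\<exists>k beta. beta \<notin> P \<and> (\<forall>w\<in>ideal_pow P k. a dvd beta * w)"
    by (rule primary_power[OF adm a P0 Padd Pmult Pprime P1])
  then obtain k beta where kb: "beta \<notin> P" "\<forall>w\<in>ideal_pow P k. a dvd beta * w"
    by (elim exE conjE)
  obtain f where f: "f \<in> End p phi" "reduce p red y f = tmult p (phv a) x" using ax by (elim imageE) simp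
  show ?thesis
  proof (intro exI[of _ k] ballI)
    fix w assume w: "w \<in> ideal_pow (char_ideal phv) k"
    have "w \<in> ideal_pow P k" using w by (simp add: P_def)
    hence "a dvd beta * w" using kb(2) by blast
    then obtain c' where c': "beta * w = a * c'" by (rule dvdE)
    have "tmult p (phv beta) (tmult p (phv w) x) = tmult p (phv (c' * a)) x"
      unfolding AK[symmetric] phv_mult[symmetric] using c' by (simp add: mult.commute)
    also have "\<dots> = tmult p (phv c') (tmult p (phv a) x)" unfolding phv_mult AK ..
    also have "\<dots> = reduce p red y (tmult p (phi c') f)" unfolding reduce_tmult_phi[OF f(1)] f(2) ..
    finally have eq: "reduce p red y (tmult p (phi c') f) = tmult p (phv beta) (tmult p (phv w) x)" by simp
    have "coeff (phv beta) 0 \<noteq> 0" using kb(1) Pm by simp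
    from sat[OF this End_phv_tmult[OF x] End_tmult_phi[OF f(1)] eq]
    show "tmult p (phv w) x \<in> reduce p red y ` End p phi" .
  qed
qed

end

theorem proposition7p1:
  fixes p :: nat
    and \<phi> :: "'a::idom \<Rightarrow> 'l::field poly"
    and v :: "'l \<Rightarrow> 'g::linordered_ab_group_add"
    and red :: "'l \<Rightarrow> 'k::field"
    and y :: 'l
  assumes "admissible_coeff_ring TYPE('a)"
    and "CHAR('a) = p" and "CHAR('l) = p"
    and "drinfeld_module p \<phi>"
    and "valuation v"
    and "residue_map v red"
    and "good_reduction_via p \<phi> v y"
  shows "(\<forall>f\<in>End p \<phi>. in_val_ring_poly v (conj_tp p y f) \<and>
            reduce p red y f \<in> End p (reduction p red y \<phi>))
    \<and> inj_on (reduce p red y) (End p \<phi>)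
    \<and> (\<forall>x\<in>End p (reduction p red y \<phi>).
          (\<exists>a. a \<noteq> 0 \<and> tmult p (reduction p red y \<phi> a) x \<in> reduce p red y ` End p \<phi>)
          \<longrightarrow> (\<exists>k. \<forall>b\<in>ideal_pow (char_ideal (reduction p red y \<phi>)) k.
                  tmult p (reduction p red y \<phi> b) x \<in> reduce p red y ` End p \<phi>))"
proof -
  interpret dmctx v red p \<phi> y
    using assms by (simp add: dmctx_def redctx_def redctx_axioms_def valctx_def dmctx_axioms_def)
  have A: "\<forall>f\<in>End p \<phi>. in_val_ring_poly v (conj_tp p y f) \<and> reduce p red y f \<in> End p phv"
    using part1a part1b by blast
  have C: "\<forall>x\<in>End p phv.
          (\<exists>a. a \<noteq> 0 \<and> tmult p (phv a) x \<in> reduce p red y ` End p \<phi>)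
          \<longrightarrow> (\<exists>k. \<forall>b\<in>ideal_pow (char_ideal phv) k.
                  tmult p (phv b) x \<in> reduce p red y ` End p \<phi>)"
  proof (intro ballI impI)
    fix x assume x: "x \<in> End p phv" and "\<exists>a. a \<noteq> 0 \<and> tmult p (phv a) x \<in> reduce p red y ` End p \<phi>"
    then obtain a where "a \<noteq> 0" "tmult p (phv a) x \<in> reduce p red y ` End p \<phi>" by blast
    from part3[OF x this] show "\<exists>k. \<forall>b\<in>ideal_pow (char_ideal phv) k. tmult p (phv b) x \<in> reduce p red y ` End p \<phi>" .
  qed
  show ?thesis unfolding phv_eq using A part2 C by (intro conjI)
qed

end
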